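(* Let $\mathcal{D}_1,\mathcal{D}_2$ be fermionically dagger compact categories (each a symmetric monoidal dagger category with duals and with a unitary monoidal $B\mathbb{Z}/2$-action $(-1)^F$), and let $F\colon \mathcal{D}_1\to\mathcal{D}_2$ be a symmetric monoidal dagger functor. Suppose that every iso-positive involution in $\mathcal{D}_2$ is the identity. Then $F$ is $B\mathbb{Z}/2$-equivariant, i.e. $F\big((-1)^F_x\big)=(-1)^F_{F(x)}$ for every object $x$ of $\mathcal{D}_1$.
   Context: A dagger category is a category $\mathcal{D}$ with a functor $\dagger\colon\mathcal{D}\to\mathcal{D}^{\mathrm{op}}$ which is the identity on objects and satisfies $f^{\dagger\dagger}=f$. An isomorphism $f$ is unitary if $f^\dagger=f^{-1}$. An endomorphism $f\colon c\to c$ is iso-positive if $f=g^\dagger g$ for some isomorphism $g\colon c\to c'$; an involution is an endomorphism $j$ with $j\circ j=\mathrm{id}$. A dagger functor satisfies $F(f^\dagger)=F(f)^\dagger$. A symmetric monoidal dagger category is a dagger category with a symmetric monoidal structure such that $(f\otimes g)^\dagger=f^\dagger\otimes g^\dagger$ and the associator, unitors and braiding $\sigma$ are unitary; a symmetric monoidal dagger functor is a symmetric monoidal functor which is a dagger functor and whose structure isomorphisms $F(x)\otimes F(y)\to F(x\otimes y)$, $1\to F(1)$ are unitary. A unitary monoidal $B\mathbb{Z}/2$-action on $\mathcal{D}$ is a natural automorphism $(-1)^F$ of the identity functor with $(-1)^F_x\circ(-1)^F_x=\mathrm{id}_x$, $(-1)^F_{x\otimes y}=(-1)^F_x\otimes(-1)^F_y$,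 $(-1)^F_1=\mathrm{id}$, and each $(-1)^F_x$ unitary. Duals: choose for each object $x$ a dual $x^*$ with $\mathrm{ev}_x\colon x^*\otimes x\to 1$, $\mathrm{coev}_x\colon 1\to x\otimes x^*$ satisfying the triangle identities; the dual of $f\colon x\to y$ is the unique $f^*\colon y^*\to x^*$ with $\mathrm{ev}_x\circ(f^*\otimes\mathrm{id}_x)=\mathrm{ev}_y\circ(\mathrm{id}_{y^*}\otimes f)$. Define the automorphism $\lambda_x$ of $x^*$ (suppressing associators and unitors) by $\lambda_x=(\mathrm{coev}_x^\dagger\otimes\mathrm{id}_{x^*})\circ(\sigma_{x^*,x}\otimes\mathrm{id}_{x^*})\circ(\mathrm{id}_{x^*}\otimes\mathrm{coev}_x)$. A symmetric monoidal dagger category with duals and unitary monoidal $B\mathbb{Z}/2$-action is fermionically dagger compact if for every object $x$ and every iso-positive automorphism $h$ of $x$, the automorphism $\lambda_x\circ(h^* )^{-1}\circ(-1)^F_{x^*}$ of $x^*$ is iso-positive (with respect to the chosen duals). *)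

theory Defs
  imports Main
begin

text \<open>The convention is  cmp C g f = g o f  (first f, then g).\<close>

record ('o, 'm) smdc =
  obs    :: "'o set"
  ars    :: "'m set"
  src    :: "'m \<Rightarrow> 'o"
  tgt    :: "'m \<Rightarrow> 'o"
  cmp    :: "'m \<Rightarrow> 'm \<Rightarrow> 'm"
  ident  :: "'o \<Rightarrow> 'm"
  dg     :: "'m \<Rightarrow> 'm"
  tno    :: "'o \<Rightarrow> 'o \<Rightarrow> 'o"
  tnm    :: "'m \<Rightarrow> 'm \<Rightarrow> 'm"
  unito  :: "'o"
  alpha  :: "'o \<Rightarrow> 'o \<Rightarrow> 'o \<Rightarrow> 'm"  \<comment> \<open>(a x b) x c -> a x (b x c)\<close>
  lunit  :: "'o \<Rightarrow> 'm"  \<comment> \<open>1 x a -> a\<close>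
  runit  :: "'o \<Rightarrow> 'm"  \<comment> \<open>a x 1 -> a\<close>
  braid  :: "'o \<Rightarrow> 'o \<Rightarrow> 'm"  \<comment> \<open>a x b -> b x a\<close>
  dualo  :: "'o \<Rightarrow> 'o"
  evl    :: "'o \<Rightarrow> 'm"  \<comment> \<open>a* x a -> 1\<close>
  coevl  :: "'o \<Rightarrow> 'm"  \<comment> \<open>1 -> a x a*\<close>
  parity :: "'o \<Rightarrow> 'm"  \<comment> \<open>(-1)^F_a : a -> a\<close>

definition hom :: "('o,'m,'z) smdc_scheme \<Rightarrow> 'o \<Rightarrow> 'o \<Rightarrow> 'm set" where
  "hom C a b = {f \<in> ars C. src C f = a \<and> tgt C f = b}"

definition is_category :: "('o,'m,'z) smdc_scheme \<Rightarrow> bool" where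
  "is_category C \<longleftrightarrow>
     (\<forall>f \<in> ars C. src C f \<in> obs C \<and> tgt C f \<in> obs C) \<and>
     (\<forall>a \<in> obs C. ident C a \<in> hom C a a) \<and>
     (\<forall>a \<in> obs C. \<forall>b \<in> obs C. \<forall>c \<in> obs C. \<forall>f \<in> hom C a b. \<forall>g \<in> hom C b c.
        cmp C g f \<in> hom C a c) \<and>
     (\<forall>a \<in> obs C. \<forall>b \<in> obs C. \<forall>f \<in> hom C a b.
        cmp C (ident C b) f = f \<and> cmp C f (ident C a) = f) \<and>
     (\<forall>a \<in> obs C. \<forall>b \<in> obs C. \<forall>c \<in> obs C. \<forall>d \<in> obs C.
        \<forall>f \<in> hom C a b. \<forall>g \<in> hom C b c. \<forall>h \<in> hom C c d.
        cmp C h (cmp C g f) = cmp C (cmp C h g) f)"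

definition is_iso :: "('o,'m,'z) smdc_scheme \<Rightarrow> 'm \<Rightarrow> 'o \<Rightarrow> 'o \<Rightarrow> bool" where
  "is_iso C f a b \<longleftrightarrow> f \<in> hom C a b \<and>
     (\<exists>g \<in> hom C b a. cmp C g f = ident C a \<and> cmp C f g = ident C b)"

definition inv_ar :: "('o,'m,'z) smdc_scheme \<Rightarrow> 'm \<Rightarrow> 'm" where
  "inv_ar C f = (THE g. g \<in> hom C (tgt C f) (src C f) \<and>
     cmp C g f = ident C (src C f) \<and> cmp C f g = ident C (tgt C f))"

definition is_unitary :: "('o,'m,'z) smdc_scheme \<Rightarrow> 'm \<Rightarrow> 'o \<Rightarrow> 'o \<Rightarrow> bool" where
  "is_unitary C f a b \<longleftrightarrow> is_iso C f a b \<and> dg C f = inv_ar C f"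

definition is_dagger_category :: "('o,'m,'z) smdc_scheme \<Rightarrow> bool" where
  "is_dagger_category C \<longleftrightarrow> is_category C \<and>
     (\<forall>a \<in> obs C. \<forall>b \<in> obs C. \<forall>f \<in> hom C a b. dg C f \<in> hom C b a \<and> dg C (dg C f) = f) \<and>
     (\<forall>a \<in> obs C. dg C (ident C a) = ident C a) \<and>
     (\<forall>a \<in> obs C. \<forall>b \<in> obs C. \<forall>c \<in> obs C. \<forall>f \<in> hom C a b. \<forall>g \<in> hom C b c.
        dg C (cmp C g f) = cmp C (dg C f) (dg C g))"

definition is_sym_monoidal_dagger :: "('o,'m,'z) smdc_scheme \<Rightarrow> bool" where
  "is_sym_monoidal_dagger C \<longleftrightarrow> is_dagger_category C \<and>
     unito C \<in> obs C \<and>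
     (\<forall>a \<in> obs C. \<forall>b \<in> obs C. tno C a b \<in> obs C) \<and>
     (\<forall>a \<in> obs C. \<forall>b \<in> obs C. \<forall>c \<in> obs C. \<forall>d \<in> obs C. \<forall>f \<in> hom C a b. \<forall>g \<in> hom C c d.
        tnm C f g \<in> hom C (tno C a c) (tno C b d) \<and> dg C (tnm C f g) = tnm C (dg C f) (dg C g)) \<and>
     (\<forall>a \<in> obs C. \<forall>b \<in> obs C. tnm C (ident C a) (ident C b) = ident C (tno C a b)) \<and>
     (\<forall>a \<in> obs C. \<forall>b \<in> obs C. \<forall>c \<in> obs C. \<forall>a' \<in> obs C. \<forall>b' \<in> obs C. \<forall>c' \<in> obs C.
        \<forall>f \<in> hom C a b. \<forall>g \<in> hom C b c. \<forall>f' \<in> hom C a' b'. \<forall>g' \<in> hom C b' c'.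
        tnm C (cmp C g f) (cmp C g' f') = cmp C (tnm C g g') (tnm C f f')) \<and>
     \<comment> \<open>associator: unitary and natural\<close>
     (\<forall>a \<in> obs C. \<forall>b \<in> obs C. \<forall>c \<in> obs C.
        is_unitary C (alpha C a b c) (tno C (tno C a b) c) (tno C a (tno C b c))) \<and>
     (\<forall>a \<in> obs C. \<forall>b \<in> obs C. \<forall>c \<in> obs C. \<forall>a' \<in> obs C. \<forall>b' \<in> obs C. \<forall>c' \<in> obs C.
        \<forall>f \<in> hom C a a'. \<forall>g \<in> hom C b b'. \<forall>h \<in> hom C c c'.
        cmp C (alpha C a' b' c') (tnm C (tnm C f g) h) =
        cmp C (tnm C f (tnm C g h)) (alpha C a b c)) \<and>
     \<comment> \<open>unitors: unitary and natural\<close>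
     (\<forall>a \<in> obs C. is_unitary C (lunit C a) (tno C (unito C) a) a \<and>
                   is_unitary C (runit C a) (tno C a (unito C)) a) \<and>
     (\<forall>a \<in> obs C. \<forall>b \<in> obs C. \<forall>f \<in> hom C a b.
        cmp C (lunit C b) (tnm C (ident C (unito C)) f) = cmp C f (lunit C a) \<and>
        cmp C (runit C b) (tnm C f (ident C (unito C))) = cmp C f (runit C a)) \<and>
     \<comment> \<open>pentagon\<close>
     (\<forall>a \<in> obs C. \<forall>b \<in> obs C. \<forall>c \<in> obs C. \<forall>d \<in> obs C.
        cmp C (alpha C a b (tno C c d)) (alpha C (tno C a b) c d) =
        cmp C (tnm C (ident C a) (alpha C b c d))
          (cmp C (alpha C a (tno C b c) d) (tnm C (alpha C a b c) (ident C d)))) \<and>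
     \<comment> \<open>triangle\<close>
     (\<forall>a \<in> obs C. \<forall>b \<in> obs C.
        cmp C (tnm C (ident C a) (lunit C b)) (alpha C a (unito C) b) =
        tnm C (runit C a) (ident C b)) \<and>
     \<comment> \<open>braiding: unitary, natural, hexagon, symmetric\<close>
     (\<forall>a \<in> obs C. \<forall>b \<in> obs C. is_unitary C (braid C a b) (tno C a b) (tno C b a)) \<and>
     (\<forall>a \<in> obs C. \<forall>b \<in> obs C. \<forall>a' \<in> obs C. \<forall>b' \<in> obs C.
        \<forall>f \<in> hom C a a'. \<forall>g \<in> hom C b b'.
        cmp C (braid C a' b') (tnm C f g) = cmp C (tnm C g f) (braid C a b)) \<and>
     (\<forall>a \<in> obs C. \<forall>b \<in> obs C. \<forall>c \<in> obs C.
        cmp C (alpha C b c a) (cmp C (braid C a (tno C b c)) (alpha C a b c)) =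
        cmp C (tnm C (ident C b) (braid C a c))
          (cmp C (alpha C b a c) (tnm C (braid C a b) (ident C c)))) \<and>
     (\<forall>a \<in> obs C. \<forall>b \<in> obs C. cmp C (braid C b a) (braid C a b) = ident C (tno C a b))"

definition has_duals :: "('o,'m,'z) smdc_scheme \<Rightarrow> bool" where
  "has_duals C \<longleftrightarrow>
     (\<forall>x \<in> obs C. dualo C x \<in> obs C \<and>
        evl C x \<in> hom C (tno C (dualo C x) x) (unito C) \<and>
        coevl C x \<in> hom C (unito C) (tno C x (dualo C x)) \<and>
        cmp C (runit C x) (cmp C (tnm C (ident C x) (evl C x))
          (cmp C (alpha C x (dualo C x) x)
            (cmp C (tnm C (coevl C x) (ident C x)) (inv_ar C (lunit C x))))) = ident C x \<and>
        cmp C (lunit C (dualo C x)) (cmp C (tnm C (evl C x) (ident C (dualo C x)))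
          (cmp C (inv_ar C (alpha C (dualo C x) x (dualo C x)))
            (cmp C (tnm C (ident C (dualo C x)) (coevl C x)) (inv_ar C (runit C (dualo C x))))))
          = ident C (dualo C x))"

definition is_unitary_Z2_action :: "('o,'m,'z) smdc_scheme \<Rightarrow> bool" where
  "is_unitary_Z2_action C \<longleftrightarrow>
     (\<forall>a \<in> obs C. parity C a \<in> hom C a a \<and> is_unitary C (parity C a) a a \<and>
        cmp C (parity C a) (parity C a) = ident C a) \<and>
     (\<forall>a \<in> obs C. \<forall>b \<in> obs C. \<forall>f \<in> hom C a b. cmp C (parity C b) f = cmp C f (parity C a)) \<and>
     (\<forall>a \<in> obs C. \<forall>b \<in> obs C. parity C (tno C a b) = tnm C (parity C a) (parity C b)) \<and>
     parity C (unito C) = ident C (unito C)"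

definition dual_ar :: "('o,'m,'z) smdc_scheme \<Rightarrow> 'm \<Rightarrow> 'm" where
  "dual_ar C f = (THE g. g \<in> hom C (dualo C (tgt C f)) (dualo C (src C f)) \<and>
     cmp C (evl C (src C f)) (tnm C g (ident C (src C f))) =
     cmp C (evl C (tgt C f)) (tnm C (ident C (dualo C (tgt C f))) f))"

text \<open>lambda_x = (coev_x^dagger (x) id) o (sigma_{x*,x} (x) id) o (id (x) coev_x),
  with associators and unitors inserted.\<close>

definition lam :: "('o,'m,'z) smdc_scheme \<Rightarrow> 'o \<Rightarrow> 'm" where
  "lam C x = (let d = dualo C x in
     cmp C (lunit C d) (cmp C (tnm C (dg C (coevl C x)) (ident C d))
       (cmp C (tnm C (braid C d x) (ident C d))
         (cmp C (inv_ar C (alpha C d x d))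
           (cmp C (tnm C (ident C d) (coevl C x)) (inv_ar C (runit C d)))))))"

definition iso_positive :: "('o,'m,'z) smdc_scheme \<Rightarrow> 'm \<Rightarrow> 'o \<Rightarrow> bool" where
  "iso_positive C f c \<longleftrightarrow> f \<in> hom C c c \<and>
     (\<exists>c' \<in> obs C. \<exists>g. is_iso C g c c' \<and> f = cmp C (dg C g) g)"

definition is_involution :: "('o,'m,'z) smdc_scheme \<Rightarrow> 'm \<Rightarrow> 'o \<Rightarrow> bool" where
  "is_involution C j c \<longleftrightarrow> j \<in> hom C c c \<and> cmp C j j = ident C c"

definition fermionically_dagger_compact :: "('o,'m,'z) smdc_scheme \<Rightarrow> bool" where
  "fermionically_dagger_compact C \<longleftrightarrow>
     is_sym_monoidal_dagger C \<and> has_duals C \<and> is_unitary_Z2_action C \<and>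
     (\<forall>x \<in> obs C. \<forall>h. is_iso C h x x \<and> iso_positive C h x \<longrightarrow>
        iso_positive C (cmp C (lam C x) (cmp C (inv_ar C (dual_ar C h)) (parity C (dualo C x))))
          (dualo C x))"

record ('o1, 'm1, 'o2, 'm2) smfun =
  fob :: "'o1 \<Rightarrow> 'o2"
  far :: "'m1 \<Rightarrow> 'm2"
  fmu :: "'o1 \<Rightarrow> 'o1 \<Rightarrow> 'm2"  \<comment> \<open>F a (x) F b -> F (a (x) b)\<close>
  feps :: "'m2"                \<comment> \<open>1 -> F 1\<close>

definition is_sm_dagger_functor ::
  "('o1,'m1,'z1) smdc_scheme \<Rightarrow> ('o2,'m2,'z2) smdc_scheme \<Rightarrow> ('o1,'m1,'o2,'m2,'z) smfun_scheme \<Rightarrow> bool" where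
  "is_sm_dagger_functor C D F \<longleftrightarrow>
     (\<forall>a \<in> obs C. fob F a \<in> obs D) \<and>
     (\<forall>a \<in> obs C. \<forall>b \<in> obs C. \<forall>f \<in> hom C a b. far F f \<in> hom D (fob F a) (fob F b)) \<and>
     (\<forall>a \<in> obs C. far F (ident C a) = ident D (fob F a)) \<and>
     (\<forall>a \<in> obs C. \<forall>b \<in> obs C. \<forall>c \<in> obs C. \<forall>f \<in> hom C a b. \<forall>g \<in> hom C b c.
        far F (cmp C g f) = cmp D (far F g) (far F f)) \<and>
     (\<forall>a \<in> obs C. \<forall>b \<in> obs C. \<forall>f \<in> hom C a b. far F (dg C f) = dg D (far F f)) \<and>
     (\<forall>a \<in> obs C. \<forall>b \<in> obs C.
        is_unitary D (fmu F a b) (tno D (fob F a) (fob F b)) (fob F (tno C a b))) \<and>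
     is_unitary D (feps F) (unito D) (fob F (unito C)) \<and>
     \<comment> \<open>naturality of mu\<close>
     (\<forall>a \<in> obs C. \<forall>b \<in> obs C. \<forall>a' \<in> obs C. \<forall>b' \<in> obs C.
        \<forall>f \<in> hom C a a'. \<forall>g \<in> hom C b b'.
        cmp D (far F (tnm C f g)) (fmu F a b) = cmp D (fmu F a' b') (tnm D (far F f) (far F g))) \<and>
     \<comment> \<open>associativity\<close>
     (\<forall>a \<in> obs C. \<forall>b \<in> obs C. \<forall>c \<in> obs C.
        cmp D (far F (alpha C a b c))
          (cmp D (fmu F (tno C a b) c) (tnm D (fmu F a b) (ident D (fob F c)))) =
        cmp D (fmu F a (tno C b c))
          (cmp D (tnm D (ident D (fob F a)) (fmu F b c))
            (alpha D (fob F a) (fob F b) (fob F c)))) \<and>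
     \<comment> \<open>unitality\<close>
     (\<forall>a \<in> obs C.
        cmp D (far F (lunit C a)) (cmp D (fmu F (unito C) a) (tnm D (feps F) (ident D (fob F a))))
          = lunit D (fob F a) \<and>
        cmp D (far F (runit C a)) (cmp D (fmu F a (unito C)) (tnm D (ident D (fob F a)) (feps F)))
          = runit D (fob F a)) \<and>
     \<comment> \<open>compatibility with the symmetry\<close>
     (\<forall>a \<in> obs C. \<forall>b \<in> obs C.
        cmp D (far F (braid C a b)) (fmu F a b) =
        cmp D (fmu F b a) (braid D (fob F a) (fob F b)))"

end

theory Submission
  imports Defs
begin

locale smdcat =
  fixes C :: "('o,'m,'z) smdc_scheme"
  assumes SM: "is_sym_monoidal_dagger C"
begin

abbreviation arr where "arr f \<equiv> f \<in> ars C"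
abbreviation ob where "ob a \<equiv> a \<in> obs C"
abbreviation sr where "sr \<equiv> src C"
abbreviation tg where "tg \<equiv> tgt C"
abbreviation cp (infixr "\<cdot>" 55) where "g \<cdot> f \<equiv> cmp C g f"
abbreviation tm (infixr "\<otimes>" 60) where "f \<otimes> g \<equiv> tnm C f g"
abbreviation tob (infixr "\<odot>" 60) where "a \<odot> b \<equiv> tno C a b"
abbreviation idn where "idn \<equiv> ident C"
abbreviation dag where "dag \<equiv> dg C"
abbreviation asc where "asc \<equiv> alpha C"
abbreviation lu where "lu \<equiv> lunit C"
abbreviation ru where "ru \<equiv> runit C"
abbreviation br where "br \<equiv> braid C"
abbreviation one where "one \<equiv> unito C"
abbreviation inv where "inv \<equiv> inv_ar C"

lemma cat: "is_category C" using SM unfolding is_sym_monoidal_dagger_def is_dagger_category_def by blast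

lemma hom_iff: "f \<in> hom C a b \<longleftrightarrow> arr f \<and> sr f = a \<and> tg f = b"
  by (auto simp: hom_def)

lemma cat_parts:
  "\<forall>f \<in> ars C. src C f \<in> obs C \<and> tgt C f \<in> obs C"
  "\<forall>a \<in> obs C. ident C a \<in> hom C a a"
  "\<forall>a \<in> obs C. \<forall>b \<in> obs C. \<forall>c \<in> obs C. \<forall>f \<in> hom C a b. \<forall>g \<in> hom C b c.
        cmp C g f \<in> hom C a c"
  "\<forall>a \<in> obs C. \<forall>b \<in> obs C. \<forall>f \<in> hom C a b.
        cmp C (ident C b) f = f \<and> cmp C f (ident C a) = f"
  "\<forall>a \<in> obs C. \<forall>b \<in> obs C. \<forall>c \<in> obs C. \<forall>d \<in> obs C.
        \<forall>f \<in> hom C a b. \<forall>g \<in> hom C b c. \<forall>h \<in> hom C c d.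
        cmp C h (cmp C g f) = cmp C (cmp C h g) f"
  using cat unfolding is_category_def by blast+

lemma ob_sr[simp]: "arr f \<Longrightarrow> ob (sr f)" and ob_tg[simp]: "arr f \<Longrightarrow> ob (tg f)"
  using cat_parts(1) by auto

lemma idn_ar[simp]: "ob a \<Longrightarrow> arr (idn a)" "ob a \<Longrightarrow> sr (idn a) = a" "ob a \<Longrightarrow> tg (idn a) = a"
  using cat_parts(2) unfolding hom_iff by auto

lemma cp_hom: "arr f \<Longrightarrow> arr g \<Longrightarrow> tg f = sr g \<Longrightarrow> g \<cdot> f \<in> hom C (sr f) (tg g)"
proof -
  assume a: "arr f" "arr g" "tg f = sr g"
  have "f \<in> hom C (sr f) (tg f)" "g \<in> hom C (tg f) (tg g)" using a by (auto simp: hom_iff)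
  then show ?thesis using cat_parts(3)[rule_format, of "sr f" "tg f" "tg g" f g] a by simp
qed

lemma cp_ar[simp]:
  assumes "arr f" "arr g" "tg f = sr g"
  shows "arr (g \<cdot> f)" "sr (g \<cdot> f) = sr f" "tg (g \<cdot> f) = tg g"
  using cp_hom[OF assms] by (auto simp: hom_iff)

lemma idl[simp]: "arr f \<Longrightarrow> tg f = a \<Longrightarrow> idn a \<cdot> f = f"
proof -
  assume a: "arr f" "tg f = a"
  have "f \<in> hom C (sr f) (tg f)" using a by (auto simp: hom_iff)
  then show ?thesis using cat_parts(4)[rule_format, of "sr f" "tg f" f] a ob_tg[OF a(1)] ob_sr[OF a(1)] by simp
qed
lemma idr[simp]: "arr f \<Longrightarrow> sr f = a \<Longrightarrow> f \<cdot> idn a = f"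
proof -
  assume a: "arr f" "sr f = a"
  have "f \<in> hom C (sr f) (tg f)" using a by (auto simp: hom_iff)
  then show ?thesis using cat_parts(4)[rule_format, of "sr f" "tg f" f] a ob_tg[OF a(1)] ob_sr[OF a(1)] by simp
qed

lemma assoc[simp]:
  assumes "arr f" "arr g" "arr h" "tg f = sr g" "tg g = sr h"
  shows "(h \<cdot> g) \<cdot> f = h \<cdot> g \<cdot> f"
proof -
  have "f \<in> hom C (sr f) (tg f)" "g \<in> hom C (tg f) (tg g)" "h \<in> hom C (tg g) (tg h)"
    using assms by (auto simp: hom_iff)
  then show ?thesis using cat_parts(5)[rule_format, of "sr f" "tg f" "tg g" "tg h" f g h] assms by simp
qed


lemma dag_parts_1: "\<forall>a \<in> obs C. \<forall>b \<in> obs C. \<forall>f \<in> hom C a b. dg C f \<in> hom C b a \<and> dg C (dg C f) = f"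
  using SM unfolding is_sym_monoidal_dagger_def is_dagger_category_def by (elim conjE) assumption
lemma dag_parts_2: "\<forall>a \<in> obs C. dg C (ident C a) = ident C a"
  using SM unfolding is_sym_monoidal_dagger_def is_dagger_category_def by (elim conjE) assumption
lemma dag_parts_3: "\<forall>a \<in> obs C. \<forall>b \<in> obs C. \<forall>c \<in> obs C. \<forall>f \<in> hom C a b. \<forall>g \<in> hom C b c.
        dg C (cmp C g f) = cmp C (dg C f) (dg C g)"
  using SM unfolding is_sym_monoidal_dagger_def is_dagger_category_def by (elim conjE) assumption
lemmas dag_parts = dag_parts_1 dag_parts_2 dag_parts_3


lemma dag_ar[simp]: "arr f \<Longrightarrow> arr (dag f)" "arr f \<Longrightarrow> sr (dag f) = tg f" "arr f \<Longrightarrow> tg (dag f) = sr f"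
  "arr f \<Longrightarrow> dag (dag f) = f"
proof -
  assume a: "arr f"
  have "f \<in> hom C (sr f) (tg f)" using a by (auto simp: hom_iff)
  then have "dag f \<in> hom C (tg f) (sr f) \<and> dag (dag f) = f" using dag_parts(1)[rule_format, of "sr f" "tg f" f] a by simp
  then show "arr (dag f)" "sr (dag f) = tg f" "tg (dag f) = sr f" "dag (dag f) = f" by (auto simp: hom_iff)
qed

lemma dag_idn[simp]: "ob a \<Longrightarrow> dag (idn a) = idn a" using dag_parts(2) by auto

lemma dag_cp[simp]: "arr f \<Longrightarrow> arr g \<Longrightarrow> tg f = sr g \<Longrightarrow> dag (g \<cdot> f) = dag f \<cdot> dag g"
proof -
  assume a: "arr f" "arr g" "tg f = sr g"
  have "f \<in> hom C (sr f) (tg f)" "g \<in> hom C (tg f) (tg g)" using a by (auto simp: hom_iff)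
  then show ?thesis using dag_parts(3)[rule_format, of "sr f" "tg f" "tg g" f g] a by simp
qed

lemma sm_parts_1: "unito C \<in> obs C"
  using SM unfolding is_sym_monoidal_dagger_def by (elim conjE) assumption
lemma sm_parts_2: "(\<forall>a \<in> obs C. \<forall>b \<in> obs C. tno C a b \<in> obs C)"
  using SM unfolding is_sym_monoidal_dagger_def by (elim conjE) assumption
lemma sm_parts_3: "(\<forall>a \<in> obs C. \<forall>b \<in> obs C. \<forall>c \<in> obs C. \<forall>d \<in> obs C. \<forall>f \<in> hom C a b. \<forall>g \<in> hom C c d.
        tnm C f g \<in> hom C (tno C a c) (tno C b d) \<and> dg C (tnm C f g) = tnm C (dg C f) (dg C g))"
  using SM unfolding is_sym_monoidal_dagger_def by (elim conjE) assumption
lemma sm_parts_4: "(\<forall>a \<in> obs C. \<forall>b \<in> obs C. tnm C (ident C a) (ident C b) = ident C (tno C a b))"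
  using SM unfolding is_sym_monoidal_dagger_def by (elim conjE) assumption
lemma sm_parts_5: "(\<forall>a \<in> obs C. \<forall>b \<in> obs C. \<forall>c \<in> obs C. \<forall>a' \<in> obs C. \<forall>b' \<in> obs C. \<forall>c' \<in> obs C.
        \<forall>f \<in> hom C a b. \<forall>g \<in> hom C b c. \<forall>f' \<in> hom C a' b'. \<forall>g' \<in> hom C b' c'.
        tnm C (cmp C g f) (cmp C g' f') = cmp C (tnm C g g') (tnm C f f'))"
  using SM unfolding is_sym_monoidal_dagger_def by (elim conjE) assumption
lemma sm_parts_6: "(\<forall>a \<in> obs C. \<forall>b \<in> obs C. \<forall>c \<in> obs C.
        is_unitary C (alpha C a b c) (tno C (tno C a b) c) (tno C a (tno C b c)))"
  using SM unfolding is_sym_monoidal_dagger_def by (elim conjE) assumption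
lemma sm_parts_7: "(\<forall>a \<in> obs C. \<forall>b \<in> obs C. \<forall>c \<in> obs C. \<forall>a' \<in> obs C. \<forall>b' \<in> obs C. \<forall>c' \<in> obs C.
        \<forall>f \<in> hom C a a'. \<forall>g \<in> hom C b b'. \<forall>h \<in> hom C c c'.
        cmp C (alpha C a' b' c') (tnm C (tnm C f g) h) =
        cmp C (tnm C f (tnm C g h)) (alpha C a b c))"
  using SM unfolding is_sym_monoidal_dagger_def by (elim conjE) assumption
lemma sm_parts_8: "(\<forall>a \<in> obs C. is_unitary C (lunit C a) (tno C (unito C) a) a \<and>
                   is_unitary C (runit C a) (tno C a (unito C)) a)"
  using SM unfolding is_sym_monoidal_dagger_def by (elim conjE) assumption
lemma sm_parts_9: "(\<forall>a \<in> obs C. \<forall>b \<in> obs C. \<forall>f \<in> hom C a b.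
        cmp C (lunit C b) (tnm C (ident C (unito C)) f) = cmp C f (lunit C a) \<and>
        cmp C (runit C b) (tnm C f (ident C (unito C))) = cmp C f (runit C a))"
  using SM unfolding is_sym_monoidal_dagger_def by (elim conjE) assumption
lemma sm_parts_10: "(\<forall>a \<in> obs C. \<forall>b \<in> obs C. \<forall>c \<in> obs C. \<forall>d \<in> obs C.
        cmp C (alpha C a b (tno C c d)) (alpha C (tno C a b) c d) =
        cmp C (tnm C (ident C a) (alpha C b c d))
          (cmp C (alpha C a (tno C b c) d) (tnm C (alpha C a b c) (ident C d))))"
  using SM unfolding is_sym_monoidal_dagger_def by (elim conjE) assumption
lemma sm_parts_11: "(\<forall>a \<in> obs C. \<forall>b \<in> obs C.
        cmp C (tnm C (ident C a) (lunit C b)) (alpha C a (unito C) b) =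
        tnm C (runit C a) (ident C b))"
  using SM unfolding is_sym_monoidal_dagger_def by (elim conjE) assumption
lemma sm_parts_12: "(\<forall>a \<in> obs C. \<forall>b \<in> obs C. is_unitary C (braid C a b) (tno C a b) (tno C b a))"
  using SM unfolding is_sym_monoidal_dagger_def by (elim conjE) assumption
lemma sm_parts_13: "(\<forall>a \<in> obs C. \<forall>b \<in> obs C. \<forall>a' \<in> obs C. \<forall>b' \<in> obs C.
        \<forall>f \<in> hom C a a'. \<forall>g \<in> hom C b b'.
        cmp C (braid C a' b') (tnm C f g) = cmp C (tnm C g f) (braid C a b))"
  using SM unfolding is_sym_monoidal_dagger_def by (elim conjE) assumption
lemma sm_parts_14: "(\<forall>a \<in> obs C. \<forall>b \<in> obs C. cmp C (braid C b a) (braid C a b) = ident C (tno C a b))"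
  using SM unfolding is_sym_monoidal_dagger_def by (elim conjE) assumption
lemmas sm_parts = sm_parts_1 sm_parts_2 sm_parts_3 sm_parts_4 sm_parts_5 sm_parts_6 sm_parts_7 sm_parts_8 sm_parts_9 sm_parts_10 sm_parts_11 sm_parts_12 sm_parts_13 sm_parts_14


lemma ob_one[simp]: "ob one" using sm_parts(1) by auto
lemma ob_tob[simp]: "ob a \<Longrightarrow> ob b \<Longrightarrow> ob (a \<odot> b)" using sm_parts(2) by auto

lemma tm_ar[simp]: "arr f \<Longrightarrow> arr g \<Longrightarrow> arr (f \<otimes> g)"
   "arr f \<Longrightarrow> arr g \<Longrightarrow> sr (f \<otimes> g) = sr f \<odot> sr g"
   "arr f \<Longrightarrow> arr g \<Longrightarrow> tg (f \<otimes> g) = tg f \<odot> tg g"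
   "arr f \<Longrightarrow> arr g \<Longrightarrow> dag (f \<otimes> g) = dag f \<otimes> dag g"
proof -
  assume a: "arr f" "arr g"
  have "f \<in> hom C (sr f) (tg f)" "g \<in> hom C (sr g) (tg g)" using a by (auto simp: hom_iff)
  then have "f \<otimes> g \<in> hom C (sr f \<odot> sr g) (tg f \<odot> tg g) \<and> dag (f \<otimes> g) = dag f \<otimes> dag g"
    using sm_parts(3)[rule_format, of "sr f" "tg f" "sr g" "tg g" f g] a by simp
  then show "arr (f \<otimes> g)" "sr (f \<otimes> g) = sr f \<odot> sr g" "tg (f \<otimes> g) = tg f \<odot> tg g"
    "dag (f \<otimes> g) = dag f \<otimes> dag g" by (auto simp: hom_iff)
qed

lemma tm_idn[simp]: "ob a \<Longrightarrow> ob b \<Longrightarrow> idn a \<otimes> idn b = idn (a \<odot> b)" using sm_parts(4) by auto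

lemma interchange:
  assumes "arr f" "arr g" "tg f = sr g" "arr f'" "arr g'" "tg f' = sr g'"
  shows "(g \<cdot> f) \<otimes> (g' \<cdot> f') = (g \<otimes> g') \<cdot> (f \<otimes> f')"
proof -
  have "f \<in> hom C (sr f) (tg f)" "g \<in> hom C (tg f) (tg g)" "f' \<in> hom C (sr f') (tg f')" "g' \<in> hom C (tg f') (tg g')"
    using assms by (auto simp: hom_iff)
  then show ?thesis using sm_parts(5)[rule_format, of "sr f" "tg f" "tg g" "sr f'" "tg f'" "tg g'" f g f' g'] assms by simp
qed

lemma tm_merge:
  assumes "arr f" "arr g" "tg f = sr g" "arr f'" "arr g'" "tg f' = sr g'"
  shows "(g \<otimes> g') \<cdot> (f \<otimes> f') = (g \<cdot> f) \<otimes> (g' \<cdot> f')"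
  using interchange[OF assms] by simp

lemma tm_merge2:
  assumes "arr f" "arr g" "tg f = sr g" "arr f'" "arr g'" "tg f' = sr g'" "arr h" "tg h = sr f \<odot> sr f'"
  shows "(g \<otimes> g') \<cdot> (f \<otimes> f') \<cdot> h = ((g \<cdot> f) \<otimes> (g' \<cdot> f')) \<cdot> h"
  using interchange[OF assms(1-6)] assms by (simp del: tm_merge)

definition iso where
  "iso f \<longleftrightarrow> arr f \<and> (\<exists>g. arr g \<and> sr g = tg f \<and> tg g = sr f \<and> g \<cdot> f = idn (sr f) \<and> f \<cdot> g = idn (tg f))"

lemma is_iso_iff: "is_iso C f a b \<longleftrightarrow> iso f \<and> sr f = a \<and> tg f = b"
proof
  assume "is_iso C f a b"
  then obtain g where 1: "f \<in> hom C a b" "g \<in> hom C b a" "g \<cdot> f = idn a" "f \<cdot> g = idn b"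
    unfolding is_iso_def by blast
  then have 2: "arr f" "sr f = a" "tg f = b" "arr g" "sr g = b" "tg g = a" by (simp_all add: hom_iff)
  have "iso f" unfolding iso_def
    apply (rule conjI[OF 2(1)])
    apply (rule exI[of _ g])
    using 1 2 by simp
  then show "iso f \<and> sr f = a \<and> tg f = b" using 2 by simp
next
  assume "iso f \<and> sr f = a \<and> tg f = b"
  then obtain g where 1: "arr f" "arr g" "sr g = tg f" "tg g = sr f" "g \<cdot> f = idn (sr f)" "f \<cdot> g = idn (tg f)"
    "sr f = a" "tg f = b"
    unfolding iso_def by blast
  have 2: "f \<in> hom C a b" "g \<in> hom C b a" using 1 by (simp_all add: hom_iff)
  show "is_iso C f a b" unfolding is_iso_def
    apply (rule conjI[OF 2(1)])
    apply (rule bexI[of _ g])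
    using 1 2 by simp_all
qed

lemma inv_props:
  assumes "iso f"
  shows "arr (inv f) \<and> sr (inv f) = tg f \<and> tg (inv f) = sr f \<and> inv f \<cdot> f = idn (sr f) \<and> f \<cdot> inv f = idn (tg f)"
proof -
  obtain g where g: "arr g" "sr g = tg f" "tg g = sr f" "g \<cdot> f = idn (sr f)" "f \<cdot> g = idn (tg f)"
    using assms unfolding iso_def by blast
  have af: "arr f" using assms iso_def by blast
  have u: "g' = g" if "g' \<in> hom C (tg f) (sr f) \<and> g' \<cdot> f = idn (sr f) \<and> f \<cdot> g' = idn (tg f)" for g'
  proof -
    have h: "arr g'" "sr g' = tg f" "tg g' = sr f" "f \<cdot> g' = idn (tg f)" using that by (auto simp: hom_iff)
    have 1: "(g \<cdot> f) \<cdot> g' = g'" by (simp only: g(4)) (simp add: h)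
    have 2: "(g \<cdot> f) \<cdot> g' = g \<cdot> (f \<cdot> g')" using h af g by (intro assoc) auto
    have 3: "g \<cdot> (f \<cdot> g') = g" by (simp only: h(4)) (simp add: g af)
    show ?thesis using 1 2 3 by simp
  qed
  have gh: "g \<in> hom C (tg f) (sr f) \<and> g \<cdot> f = idn (sr f) \<and> f \<cdot> g = idn (tg f)"
    using g by (simp add: hom_iff)
  have "inv f = g" unfolding inv_ar_def
    apply (rule the_equality)
     apply (rule gh)
    apply (erule u)
    done
  then show ?thesis using g by simp
qed

lemma inv_ar[simp]: "iso f \<Longrightarrow> arr (inv f)" "iso f \<Longrightarrow> sr (inv f) = tg f" "iso f \<Longrightarrow> tg (inv f) = sr f"
  "iso f \<Longrightarrow> inv f \<cdot> f = idn (sr f)" "iso f \<Longrightarrow> f \<cdot> inv f = idn (tg f)"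
  using inv_props by auto

lemma iso_arr[simp]: "iso f \<Longrightarrow> arr f" unfolding iso_def by blast

lemma inv_cancel[simp]: "iso f \<Longrightarrow> arr h \<Longrightarrow> tg h = sr f \<Longrightarrow> inv f \<cdot> f \<cdot> h = h"
   "iso f \<Longrightarrow> arr h \<Longrightarrow> tg h = tg f \<Longrightarrow> f \<cdot> inv f \<cdot> h = h"
proof -
  assume a: "iso f" "arr h" "tg h = sr f"
  have "inv f \<cdot> f \<cdot> h = (inv f \<cdot> f) \<cdot> h" using a by (intro assoc[symmetric]) auto
  also have "\<dots> = h" using a by (simp only: inv_ar(4)) simp
  finally show "inv f \<cdot> f \<cdot> h = h" .
next
  assume a: "iso f" "arr h" "tg h = tg f"
  have "f \<cdot> inv f \<cdot> h = (f \<cdot> inv f) \<cdot> h" using a by (intro assoc[symmetric]) auto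
  also have "\<dots> = h" using a by (simp only: inv_ar(5)) simp
  finally show "f \<cdot> inv f \<cdot> h = h" .
qed

lemma inv_unique:
  assumes "iso f" "arr g" "sr g = tg f" "g \<cdot> f = idn (sr f)"
  shows "inv f = g"
proof -
  have "g \<cdot> f \<cdot> inv f = (g \<cdot> f) \<cdot> inv f" using assms by (intro assoc[symmetric]) auto
  also have "\<dots> = inv f" using assms by (simp only: assms(4)) simp
  finally show ?thesis using assms by simp
qed

lemma inv_unique':
  assumes "iso f" "arr g" "tg g = sr f" "f \<cdot> g = idn (tg f)"
  shows "inv f = g"
proof -
  have "inv f \<cdot> f \<cdot> g = inv f" using assms by (simp only: assms(4)) simp
  moreover have "inv f \<cdot> f \<cdot> g = g" using assms by (intro inv_cancel) auto
  ultimately show ?thesis by simp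
qed

lemma isoI: "arr f \<Longrightarrow> arr g \<Longrightarrow> sr g = tg f \<Longrightarrow> tg g = sr f \<Longrightarrow> g \<cdot> f = idn (sr f) \<Longrightarrow> f \<cdot> g = idn (tg f) \<Longrightarrow> iso f"
  unfolding iso_def by blast

lemma iso_idn[simp]: "ob a \<Longrightarrow> iso (idn a)" by (rule isoI[of _ "idn a"]) auto
lemma inv_idn[simp]: "ob a \<Longrightarrow> inv (idn a) = idn a" by (rule inv_unique) auto
lemma iso_inv[simp]: "iso f \<Longrightarrow> iso (inv f)" by (rule isoI[of _ f]) auto
lemma inv_inv[simp]: "iso f \<Longrightarrow> inv (inv f) = f" by (rule inv_unique) auto
lemma iso_cp[simp]: "iso f \<Longrightarrow> iso g \<Longrightarrow> tg f = sr g \<Longrightarrow> iso (g \<cdot> f)"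
  by (rule isoI[of _ "inv f \<cdot> inv g"]) auto
lemma inv_cp[simp]: "iso f \<Longrightarrow> iso g \<Longrightarrow> tg f = sr g \<Longrightarrow> inv (g \<cdot> f) = inv f \<cdot> inv g"
  by (rule inv_unique) auto
lemma iso_tm[simp]: "iso f \<Longrightarrow> iso g \<Longrightarrow> iso (f \<otimes> g)"
  by (rule isoI[of _ "inv f \<otimes> inv g"]) (auto simp: tm_merge)
lemma inv_tm[simp]: "iso f \<Longrightarrow> iso g \<Longrightarrow> inv (f \<otimes> g) = inv f \<otimes> inv g"
  by (rule inv_unique) (auto simp: tm_merge)
lemma iso_dag[simp]: "iso f \<Longrightarrow> iso (dag f)"
proof -
  assume a: "iso f"
  have "dag (inv f) \<cdot> dag f = dag (f \<cdot> inv f)" using a by (intro dag_cp[symmetric]) auto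
  moreover have "dag f \<cdot> dag (inv f) = dag (inv f \<cdot> f)" using a by (intro dag_cp[symmetric]) auto
  ultimately show ?thesis using a by (intro isoI[of _ "dag (inv f)"]) auto
qed
lemma inv_dag[simp]: "iso f \<Longrightarrow> inv (dag f) = dag (inv f)"
proof -
  assume a: "iso f"
  have "dag (inv f) \<cdot> dag f = dag (f \<cdot> inv f)" using a by (intro dag_cp[symmetric]) auto
  then show ?thesis using a by (intro inv_unique) auto
qed

lemma is_unitary_iff: "is_unitary C f a b \<longleftrightarrow> iso f \<and> sr f = a \<and> tg f = b \<and> dag f = inv f"
  unfolding is_unitary_def is_iso_iff by auto

end

context smdcat begin

lemma asc_props[simp]: "ob a \<Longrightarrow> ob b \<Longrightarrow> ob c \<Longrightarrow> iso (asc a b c)"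
  "ob a \<Longrightarrow> ob b \<Longrightarrow> ob c \<Longrightarrow> sr (asc a b c) = (a \<odot> b) \<odot> c"
  "ob a \<Longrightarrow> ob b \<Longrightarrow> ob c \<Longrightarrow> tg (asc a b c) = a \<odot> (b \<odot> c)"
  "ob a \<Longrightarrow> ob b \<Longrightarrow> ob c \<Longrightarrow> dag (asc a b c) = inv (asc a b c)"
  using sm_parts(6) unfolding is_unitary_iff by auto

lemma lu_props[simp]: "ob a \<Longrightarrow> iso (lu a)" "ob a \<Longrightarrow> sr (lu a) = one \<odot> a"
  "ob a \<Longrightarrow> tg (lu a) = a" "ob a \<Longrightarrow> dag (lu a) = inv (lu a)"
  using sm_parts(8) unfolding is_unitary_iff by auto

lemma ru_props[simp]: "ob a \<Longrightarrow> iso (ru a)" "ob a \<Longrightarrow> sr (ru a) = a \<odot> one"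
  "ob a \<Longrightarrow> tg (ru a) = a" "ob a \<Longrightarrow> dag (ru a) = inv (ru a)"
  using sm_parts(8) unfolding is_unitary_iff by auto

lemma br_props[simp]: "ob a \<Longrightarrow> ob b \<Longrightarrow> iso (br a b)"
  "ob a \<Longrightarrow> ob b \<Longrightarrow> sr (br a b) = a \<odot> b"
  "ob a \<Longrightarrow> ob b \<Longrightarrow> tg (br a b) = b \<odot> a"
  "ob a \<Longrightarrow> ob b \<Longrightarrow> dag (br a b) = inv (br a b)"
  using sm_parts(12) unfolding is_unitary_iff by auto

lemma struct_arr[simp]: "ob a \<Longrightarrow> ob b \<Longrightarrow> ob c \<Longrightarrow> arr (asc a b c)"
  "ob a \<Longrightarrow> arr (lu a)" "ob a \<Longrightarrow> arr (ru a)" "ob a \<Longrightarrow> ob b \<Longrightarrow> arr (br a b)"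
  by (simp_all add: iso_arr)

declare iso_arr[simp del]

lemma asc_nat:
  assumes "arr f" "arr g" "arr h"
  shows "asc (tg f) (tg g) (tg h) \<cdot> ((f \<otimes> g) \<otimes> h) = (f \<otimes> (g \<otimes> h)) \<cdot> asc (sr f) (sr g) (sr h)"
proof -
  have "f \<in> hom C (sr f) (tg f)" "g \<in> hom C (sr g) (tg g)" "h \<in> hom C (sr h) (tg h)"
    using assms by (auto simp: hom_iff)
  then show ?thesis using sm_parts(7)[rule_format, of "sr f" "sr g" "sr h" "tg f" "tg g" "tg h" f g h] assms by simp
qed

lemma lu_nat:
  assumes "arr f"
  shows "lu (tg f) \<cdot> (idn one \<otimes> f) = f \<cdot> lu (sr f)"
proof -
  have "f \<in> hom C (sr f) (tg f)" using assms by (auto simp: hom_iff)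
  then show ?thesis using sm_parts(9)[rule_format, of "sr f" "tg f" f] assms by simp
qed

lemma ru_nat:
  assumes "arr f"
  shows "ru (tg f) \<cdot> (f \<otimes> idn one) = f \<cdot> ru (sr f)"
proof -
  have "f \<in> hom C (sr f) (tg f)" using assms by (auto simp: hom_iff)
  then show ?thesis using sm_parts(9)[rule_format, of "sr f" "tg f" f] assms by simp
qed

lemma br_nat:
  assumes "arr f" "arr g"
  shows "br (tg f) (tg g) \<cdot> (f \<otimes> g) = (g \<otimes> f) \<cdot> br (sr f) (sr g)"
proof -
  have "f \<in> hom C (sr f) (tg f)" "g \<in> hom C (sr g) (tg g)" using assms by (auto simp: hom_iff)
  then show ?thesis using sm_parts(13)[rule_format, of "sr f" "sr g" "tg f" "tg g" f g] assms by simp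
qed

lemma pentagon:
  assumes "ob a" "ob b" "ob c" "ob d"
  shows "asc a b (c \<odot> d) \<cdot> asc (a \<odot> b) c d = (idn a \<otimes> asc b c d) \<cdot> asc a (b \<odot> c) d \<cdot> (asc a b c \<otimes> idn d)"
  using sm_parts(10) assms by auto

lemma triangle:
  assumes "ob a" "ob b"
  shows "(idn a \<otimes> lu b) \<cdot> asc a one b = ru a \<otimes> idn b"
  using sm_parts(11) assms by auto

lemma br_sym:
  assumes "ob a" "ob b"
  shows "br b a \<cdot> br a b = idn (a \<odot> b)"
  using sm_parts(14) assms by auto

lemma chain2: "g \<cdot> f = X \<Longrightarrow> arr f \<Longrightarrow> arr g \<Longrightarrow> tg f = sr g \<Longrightarrow> arr k \<Longrightarrow> tg k = sr f \<Longrightarrow> g \<cdot> f \<cdot> k = X \<cdot> k"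
proof -
  assume a: "g \<cdot> f = X" "arr f" "arr g" "tg f = sr g" "arr k" "tg k = sr f"
  have "(g \<cdot> f) \<cdot> k = g \<cdot> f \<cdot> k" using a(2-6) by simp
  moreover have "(g \<cdot> f) \<cdot> k = X \<cdot> k" by (subst a(1)) (rule refl)
  ultimately show ?thesis by metis
qed
lemma chain3: "h \<cdot> g \<cdot> f = X \<Longrightarrow> arr f \<Longrightarrow> arr g \<Longrightarrow> arr h \<Longrightarrow> tg f = sr g \<Longrightarrow> tg g = sr h \<Longrightarrow> arr k \<Longrightarrow> tg k = sr f \<Longrightarrow> h \<cdot> g \<cdot> f \<cdot> k = X \<cdot> k"
proof -
  assume a: "h \<cdot> g \<cdot> f = X" "arr f" "arr g" "arr h" "tg f = sr g" "tg g = sr h" "arr k" "tg k = sr f"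
  have "(h \<cdot> g \<cdot> f) \<cdot> k = h \<cdot> g \<cdot> f \<cdot> k" using a(2-8) by simp
  moreover have "(h \<cdot> g \<cdot> f) \<cdot> k = X \<cdot> k" by (subst a(1)) (rule refl)
  ultimately show ?thesis by metis
qed

lemma cancel_iso_r:
  assumes "iso P" "arr f" "arr g" "sr f = tg P" "sr g = tg P" "f \<cdot> P = g \<cdot> P"
  shows "f = g"
proof -
  have "(f \<cdot> P) \<cdot> inv P = (g \<cdot> P) \<cdot> inv P" by (simp only: assms(6))
  then show ?thesis using assms(1-5) iso_arr[OF assms(1)] by simp
qed

lemma cancel_iso_l:
  assumes "iso P" "arr f" "arr g" "tg f = sr P" "tg g = sr P" "P \<cdot> f = P \<cdot> g"
  shows "f = g"
proof -
  have "inv P \<cdot> (P \<cdot> f) = inv P \<cdot> (P \<cdot> g)" by (simp only: assms(6))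
  then show ?thesis using assms(1-5) iso_arr[OF assms(1)] by simp
qed

lemma cancel_one_l:
  assumes "arr f" "arr g" "sr f = sr g" "tg f = tg g" "idn one \<otimes> f = idn one \<otimes> g"
  shows "f = g"
proof -
  have "f \<cdot> lu (sr f) = g \<cdot> lu (sr f)" using lu_nat[OF assms(1)] lu_nat[OF assms(2)] assms(3,4,5) by metis
  then show ?thesis using assms(1-4) by (intro cancel_iso_r[of "lu (sr f)" f g]) simp_all
qed

lemma cancel_one_r:
  assumes "arr f" "arr g" "sr f = sr g" "tg f = tg g" "f \<otimes> idn one = g \<otimes> idn one"
  shows "f = g"
proof -
  have "f \<cdot> ru (sr f) = g \<cdot> ru (sr f)" using ru_nat[OF assms(1)] ru_nat[OF assms(2)] assms(3,4,5) by metis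
  then show ?thesis using assms(1-4) by (intro cancel_iso_r[of "ru (sr f)" f g]) simp_all
qed


lemma cancel_r: "f \<cdot> P = g \<cdot> P \<Longrightarrow> iso P \<Longrightarrow> arr f \<Longrightarrow> arr g \<Longrightarrow> sr f = tg P \<Longrightarrow> sr g = tg P \<Longrightarrow> f = g"
  using cancel_iso_r by blast
lemma cancel_l: "P \<cdot> f = P \<cdot> g \<Longrightarrow> iso P \<Longrightarrow> arr f \<Longrightarrow> arr g \<Longrightarrow> tg f = sr P \<Longrightarrow> tg g = sr P \<Longrightarrow> f = g"
  using cancel_iso_l by blast
lemma cancel_1l: "idn one \<otimes> f = idn one \<otimes> g \<Longrightarrow> arr f \<Longrightarrow> arr g \<Longrightarrow> sr f = sr g \<Longrightarrow> tg f = tg g \<Longrightarrow> f = g"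
  using cancel_one_l by blast
lemma cancel_1r: "f \<otimes> idn one = g \<otimes> idn one \<Longrightarrow> arr f \<Longrightarrow> arr g \<Longrightarrow> sr f = sr g \<Longrightarrow> tg f = tg g \<Longrightarrow> f = g"
  using cancel_one_r by blast

end

context smdcat begin

lemma K1:
  assumes a: "ob a" and b: "ob b"
  shows "lu (a \<odot> b) \<cdot> asc one a b = lu a \<otimes> idn b"
proof -
  define P where "P = asc one (one \<odot> a) b \<cdot> (asc one one a \<otimes> idn b)"
  have isoP: "iso P" "sr P = ((one \<odot> one) \<odot> a) \<odot> b" "tg P = one \<odot> ((one \<odot> a) \<odot> b)"
    unfolding P_def using a b by simp_all
  have pent: "asc one one (a \<odot> b) \<cdot> asc (one \<odot> one) a b = (idn one \<otimes> asc one a b) \<cdot> asc one (one \<odot> a) b \<cdot> (asc one one a \<otimes> idn b)"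
    using pentagon[of one one a b] a b by simp
  have tri1: "(idn one \<otimes> lu (a \<odot> b)) \<cdot> asc one one (a \<odot> b) = ru one \<otimes> idn (a \<odot> b)"
    using triangle[of one "a \<odot> b"] a b by simp
  have tri2: "(idn one \<otimes> lu a) \<cdot> asc one one a = ru one \<otimes> idn a"
    using triangle[of one a] a b by simp
  have nat1: "asc one a b \<cdot> ((ru one \<otimes> idn a) \<otimes> idn b) = (ru one \<otimes> idn (a \<odot> b)) \<cdot> asc (one \<odot> one) a b"
    using asc_nat[of "ru one" "idn a" "idn b"] a b by simp
  have nat2: "asc one a b \<cdot> ((idn one \<otimes> lu a) \<otimes> idn b) = (idn one \<otimes> (lu a \<otimes> idn b)) \<cdot> asc one (one \<odot> a) b"
    using asc_nat[of "idn one" "lu a" "idn b"] a b by simp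
  have "(idn one \<otimes> (lu (a \<odot> b) \<cdot> asc one a b)) \<cdot> P
      = (idn one \<otimes> lu (a \<odot> b)) \<cdot> (idn one \<otimes> asc one a b) \<cdot> asc one (one \<odot> a) b \<cdot> (asc one one a \<otimes> idn b)"
    unfolding P_def using a b by (simp add: tm_merge tm_merge2)
  also have "\<dots> = (idn one \<otimes> lu (a \<odot> b)) \<cdot> asc one one (a \<odot> b) \<cdot> asc (one \<odot> one) a b"
    using pent a b by simp
  also have "\<dots> = (ru one \<otimes> idn (a \<odot> b)) \<cdot> asc (one \<odot> one) a b"
    using chain2[OF tri1] a b by simp
  also have "\<dots> = asc one a b \<cdot> ((ru one \<otimes> idn a) \<otimes> idn b)"
    using nat1 by simp
  also have "\<dots> = asc one a b \<cdot> (((idn one \<otimes> lu a) \<cdot> asc one one a) \<otimes> idn b)"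
    using tri2 by simp
  also have "\<dots> = asc one a b \<cdot> ((idn one \<otimes> lu a) \<otimes> idn b) \<cdot> (asc one one a \<otimes> idn b)"
    using a b by (simp add: tm_merge tm_merge2)
  also have "\<dots> = (idn one \<otimes> (lu a \<otimes> idn b)) \<cdot> P"
    unfolding P_def using chain2[OF nat2] a b by simp
  finally have "(idn one \<otimes> (lu (a \<odot> b) \<cdot> asc one a b)) \<cdot> P = (idn one \<otimes> (lu a \<otimes> idn b)) \<cdot> P" .
  then have "idn one \<otimes> (lu (a \<odot> b) \<cdot> asc one a b) = idn one \<otimes> (lu a \<otimes> idn b)"
    by (rule cancel_r) (use isoP a b in simp_all)
  then show ?thesis by (rule cancel_1l) (use a b in simp_all)
qed


lemma K2:
  assumes a: "ob a" and b: "ob b"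
  shows "(idn a \<otimes> ru b) \<cdot> asc a b one = ru (a \<odot> b)"
proof -
  have pent: "asc a b (one \<odot> one) \<cdot> asc (a \<odot> b) one one = (idn a \<otimes> asc b one one) \<cdot> asc a (b \<odot> one) one \<cdot> (asc a b one \<otimes> idn one)"
    using pentagon[of a b one one] a b by simp
  have tri1: "(idn (a \<odot> b) \<otimes> lu one) \<cdot> asc (a \<odot> b) one one = ru (a \<odot> b) \<otimes> idn one"
    using triangle[of "a \<odot> b" one] a b by simp
  have tri2: "(idn b \<otimes> lu one) \<cdot> asc b one one = ru b \<otimes> idn one"
    using triangle[of b one] a b by simp
  have nat1: "asc a b one \<cdot> ((idn a \<otimes> idn b) \<otimes> lu one) = (idn a \<otimes> (idn b \<otimes> lu one)) \<cdot> asc a b (one \<odot> one)"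
    using asc_nat[of "idn a" "idn b" "lu one"] a b by simp
  have nat2: "asc a b one \<cdot> ((idn a \<otimes> ru b) \<otimes> idn one) = (idn a \<otimes> (ru b \<otimes> idn one)) \<cdot> asc a (b \<odot> one) one"
    using asc_nat[of "idn a" "ru b" "idn one"] a b by simp
  have "asc a b one \<cdot> (ru (a \<odot> b) \<otimes> idn one) = asc a b one \<cdot> (idn (a \<odot> b) \<otimes> lu one) \<cdot> asc (a \<odot> b) one one"
    using tri1 a b by simp
  also have "\<dots> = (idn a \<otimes> (idn b \<otimes> lu one)) \<cdot> asc a b (one \<odot> one) \<cdot> asc (a \<odot> b) one one"
    using chain2[OF nat1] a b by simp
  also have "\<dots> = (idn a \<otimes> (idn b \<otimes> lu one)) \<cdot> (idn a \<otimes> asc b one one) \<cdot> asc a (b \<odot> one) one \<cdot> (asc a b one \<otimes> idn one)"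
    using pent a b by simp
  also have "\<dots> = (idn a \<otimes> ((idn b \<otimes> lu one) \<cdot> asc b one one)) \<cdot> asc a (b \<odot> one) one \<cdot> (asc a b one \<otimes> idn one)"
    using a b by (simp add: tm_merge tm_merge2)
  also have "\<dots> = (idn a \<otimes> (ru b \<otimes> idn one)) \<cdot> asc a (b \<odot> one) one \<cdot> (asc a b one \<otimes> idn one)"
    using tri2 by simp
  also have "\<dots> = asc a b one \<cdot> ((idn a \<otimes> ru b) \<otimes> idn one) \<cdot> (asc a b one \<otimes> idn one)"
    using chain2[OF nat2] a b by simp
  also have "\<dots> = asc a b one \<cdot> (((idn a \<otimes> ru b) \<cdot> asc a b one) \<otimes> idn one)"
    using a b by (simp add: tm_merge tm_merge2)
  finally have "asc a b one \<cdot> (ru (a \<odot> b) \<otimes> idn one) = asc a b one \<cdot> (((idn a \<otimes> ru b) \<cdot> asc a b one) \<otimes> idn one)" .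
  then have "ru (a \<odot> b) \<otimes> idn one = ((idn a \<otimes> ru b) \<cdot> asc a b one) \<otimes> idn one"
    by (rule cancel_l) (use a b in simp_all)
  then have "ru (a \<odot> b) = (idn a \<otimes> ru b) \<cdot> asc a b one" by (rule cancel_1r) (use a b in simp_all)
  then show ?thesis by (rule sym)
qed

lemma K3: "lu one = ru one"
proof -
  have k1: "lu (one \<odot> one) \<cdot> asc one one one = lu one \<otimes> idn one" using K1[of one one] by simp
  have tri: "(idn one \<otimes> lu one) \<cdot> asc one one one = ru one \<otimes> idn one" using triangle[of one one] by simp
  have "lu one \<cdot> (idn one \<otimes> lu one) = lu one \<cdot> lu (one \<odot> one)" using lu_nat[of "lu one"] by simp
  then have e: "idn one \<otimes> lu one = lu (one \<odot> one)" by (rule cancel_l) simp_all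
  have "lu one \<otimes> idn one = ru one \<otimes> idn one" using k1 tri e by simp
  then show ?thesis by (rule cancel_1r) simp_all
qed

end

context smdcat begin

lemma nat_inv:
  assumes eq: "X \<cdot> f = g \<cdot> Y" and i: "iso X" "iso Y" and a: "arr f" "arr g" "tg f = sr X" "tg Y = sr g" "tg g = tg X"
  shows "inv X \<cdot> g = f \<cdot> inv Y"
proof -
  have ax: "arr X" "arr Y" using i iso_arr by auto
  have "(inv X \<cdot> (X \<cdot> f)) \<cdot> inv Y = (inv X \<cdot> (g \<cdot> Y)) \<cdot> inv Y" by (simp only: eq)
  moreover have "(inv X \<cdot> (X \<cdot> f)) \<cdot> inv Y = f \<cdot> inv Y" using i a ax by simp
  moreover have "(inv X \<cdot> (g \<cdot> Y)) \<cdot> inv Y = inv X \<cdot> g" using i a ax by simp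
  ultimately show ?thesis by metis
qed

lemma asc_nat_inv:
  assumes "arr f" "arr g" "arr h"
  shows "inv (asc (tg f) (tg g) (tg h)) \<cdot> (f \<otimes> (g \<otimes> h)) = ((f \<otimes> g) \<otimes> h) \<cdot> inv (asc (sr f) (sr g) (sr h))"
  by (rule nat_inv[OF asc_nat[OF assms]]) (use assms in simp_all)

lemma lu_nat_inv:
  assumes "arr f"
  shows "inv (lu (tg f)) \<cdot> f = (idn one \<otimes> f) \<cdot> inv (lu (sr f))"
  by (rule nat_inv[OF lu_nat[OF assms]]) (use assms in simp_all)

lemma ru_nat_inv:
  assumes "arr f"
  shows "inv (ru (tg f)) \<cdot> f = (f \<otimes> idn one) \<cdot> inv (ru (sr f))"
  by (rule nat_inv[OF ru_nat[OF assms]]) (use assms in simp_all)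

lemma K1inv:
  assumes "ob a" "ob b"
  shows "(lu a \<otimes> idn b) \<cdot> inv (asc one a b) = lu (a \<odot> b)"
proof -
  have "(lu (a \<odot> b) \<cdot> asc one a b) \<cdot> inv (asc one a b) = lu (a \<odot> b)" using assms by simp
  then show ?thesis using K1[OF assms] by simp
qed

lemma K2inv:
  assumes "ob a" "ob b"
  shows "idn a \<otimes> inv (ru b) = asc a b one \<cdot> inv (ru (a \<odot> b))"
proof -
  have "inv ((idn a \<otimes> ru b) \<cdot> asc a b one) = inv (ru (a \<odot> b))" using K2[OF assms] by simp
  then have "inv (asc a b one) \<cdot> (idn a \<otimes> inv (ru b)) = inv (ru (a \<odot> b))" using assms by simp
  then have "asc a b one \<cdot> inv (asc a b one) \<cdot> (idn a \<otimes> inv (ru b)) = asc a b one \<cdot> inv (ru (a \<odot> b))" by simp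
  then show ?thesis using assms by simp
qed

lemma pent_inv:
  assumes "ob a" "ob b" "ob c" "ob d"
  shows "(idn a \<otimes> inv (asc b c d)) \<cdot> asc a b (c \<odot> d) = asc a (b \<odot> c) d \<cdot> (asc a b c \<otimes> idn d) \<cdot> inv (asc (a \<odot> b) c d)"
proof -
  have p: "asc a b (c \<odot> d) \<cdot> asc (a \<odot> b) c d = (idn a \<otimes> asc b c d) \<cdot> asc a (b \<odot> c) d \<cdot> (asc a b c \<otimes> idn d)"
    by (rule pentagon[OF assms])
  have "(idn a \<otimes> inv (asc b c d)) \<cdot> (asc a b (c \<odot> d) \<cdot> asc (a \<odot> b) c d) \<cdot> inv (asc (a \<odot> b) c d)
     = (idn a \<otimes> inv (asc b c d)) \<cdot> ((idn a \<otimes> asc b c d) \<cdot> asc a (b \<odot> c) d \<cdot> (asc a b c \<otimes> idn d)) \<cdot> inv (asc (a \<odot> b) c d)"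
    by (simp only: p)
  moreover have "(idn a \<otimes> inv (asc b c d)) \<cdot> (asc a b (c \<odot> d) \<cdot> asc (a \<odot> b) c d) \<cdot> inv (asc (a \<odot> b) c d)
     = (idn a \<otimes> inv (asc b c d)) \<cdot> asc a b (c \<odot> d)" using assms by simp
  moreover have "(idn a \<otimes> inv (asc b c d)) \<cdot> ((idn a \<otimes> asc b c d) \<cdot> asc a (b \<odot> c) d \<cdot> (asc a b c \<otimes> idn d)) \<cdot> inv (asc (a \<odot> b) c d)
     = asc a (b \<odot> c) d \<cdot> (asc a b c \<otimes> idn d) \<cdot> inv (asc (a \<odot> b) c d)" using assms by (simp add: tm_merge tm_merge2)
  ultimately show ?thesis by metis
qed

end

context smdcat begin

definition tri1 where "tri1 x d e c \<longleftrightarrow> ru x \<cdot> (idn x \<otimes> e) \<cdot> asc x d x \<cdot> (c \<otimes> idn x) \<cdot> inv (lu x) = idn x"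
definition tri2 where "tri2 x d e c \<longleftrightarrow> lu d \<cdot> (e \<otimes> idn d) \<cdot> inv (asc d x d) \<cdot> (idn d \<otimes> c) \<cdot> inv (ru d) = idn d"

lemma tri1':
  assumes "tri1 x d e c" "ob x" "ob d" "arr e" "sr e = d \<odot> x" "tg e = one" "arr c" "sr c = one" "tg c = x \<odot> d"
  shows "ru x \<cdot> (idn x \<otimes> e) \<cdot> asc x d x \<cdot> (c \<otimes> idn x) = lu x"
proof -
  have "(ru x \<cdot> (idn x \<otimes> e) \<cdot> asc x d x \<cdot> (c \<otimes> idn x) \<cdot> inv (lu x)) \<cdot> lu x = lu x"
    using assms(1) unfolding tri1_def using assms by simp
  then show ?thesis using assms by simp
qed

lemma dual_rel:
  assumes x: "ob x" and d: "ob d" and D: "ob D" and e: "arr e" "sr e = d \<odot> x" "tg e = one"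
    and c: "arr c" "sr c = one" "tg c = x \<odot> d" and t1: "tri1 x d e c"
    and K: "arr K" "sr K = one" "tg K = x \<odot> D"
  shows "(idn x \<otimes> (lu D \<cdot> (e \<otimes> idn D) \<cdot> inv (asc d x D) \<cdot> (idn d \<otimes> K) \<cdot> inv (ru d))) \<cdot> c = K"
proof -
  note ob = x d D
  have t1': "ru x \<cdot> (idn x \<otimes> e) \<cdot> asc x d x \<cdot> (c \<otimes> idn x) = lu x" by (rule tri1'[OF t1 x d e c])
  have k2: "idn x \<otimes> inv (ru d) = asc x d one \<cdot> inv (ru (x \<odot> d))" by (rule K2inv[OF x d])
  have rn: "inv (ru (x \<odot> d)) \<cdot> c = (c \<otimes> idn one) \<cdot> inv (ru one)" using ru_nat_inv[OF c(1)] c by simp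
  have nB: "(idn x \<otimes> (idn d \<otimes> K)) \<cdot> asc x d one = asc x d (x \<odot> D) \<cdot> (idn (x \<odot> d) \<otimes> K)"
    using asc_nat[of "idn x" "idn d" K] ob K by simp
  have nC: "(idn x \<otimes> inv (asc d x D)) \<cdot> asc x d (x \<odot> D) = asc x (d \<odot> x) D \<cdot> (asc x d x \<otimes> idn D) \<cdot> inv (asc (x \<odot> d) x D)"
    by (rule pent_inv[OF x d x D])
  have nD: "(idn x \<otimes> (e \<otimes> idn D)) \<cdot> asc x (d \<odot> x) D = asc x one D \<cdot> ((idn x \<otimes> e) \<otimes> idn D)"
    using asc_nat[of "idn x" e "idn D"] ob e by simp
  have tE: "(idn x \<otimes> lu D) \<cdot> asc x one D = ru x \<otimes> idn D" by (rule triangle[OF x D])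
  have nF: "inv (asc (x \<odot> d) x D) \<cdot> (c \<otimes> idn (x \<odot> D)) = ((c \<otimes> idn x) \<otimes> idn D) \<cdot> inv (asc one x D)"
    using asc_nat_inv[of c "idn x" "idn D"] ob c by simp
  have k1: "(lu x \<otimes> idn D) \<cdot> inv (asc one x D) = lu (x \<odot> D)" by (rule K1inv[OF x D])
  have ln: "lu (x \<odot> D) \<cdot> (idn one \<otimes> K) = K \<cdot> lu one" using lu_nat[OF K(1)] K by simp
  have "(idn x \<otimes> (lu D \<cdot> (e \<otimes> idn D) \<cdot> inv (asc d x D) \<cdot> (idn d \<otimes> K) \<cdot> inv (ru d))) \<cdot> c
      = (idn x \<otimes> lu D) \<cdot> (idn x \<otimes> (e \<otimes> idn D)) \<cdot> (idn x \<otimes> inv (asc d x D)) \<cdot> (idn x \<otimes> (idn d \<otimes> K)) \<cdot> (idn x \<otimes> inv (ru d)) \<cdot> c"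
    using ob e c K by (simp add: tm_merge tm_merge2)
  also have "\<dots> = (idn x \<otimes> lu D) \<cdot> (idn x \<otimes> (e \<otimes> idn D)) \<cdot> (idn x \<otimes> inv (asc d x D)) \<cdot> (idn x \<otimes> (idn d \<otimes> K)) \<cdot> asc x d one \<cdot> (c \<otimes> idn one) \<cdot> inv (ru one)"
    using k2 rn ob e c K by simp
  also have "\<dots> = (idn x \<otimes> lu D) \<cdot> (idn x \<otimes> (e \<otimes> idn D)) \<cdot> (idn x \<otimes> inv (asc d x D)) \<cdot> asc x d (x \<odot> D) \<cdot> (idn (x \<odot> d) \<otimes> K) \<cdot> (c \<otimes> idn one) \<cdot> inv (ru one)"
    using nB chain2[OF nB] ob e c K by simp
  also have "\<dots> = (idn x \<otimes> lu D) \<cdot> (idn x \<otimes> (e \<otimes> idn D)) \<cdot> (idn x \<otimes> inv (asc d x D)) \<cdot> asc x d (x \<odot> D) \<cdot> (c \<otimes> idn (x \<odot> D)) \<cdot> (idn one \<otimes> K) \<cdot> inv (ru one)"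
    using ob e c K by (simp add: tm_merge tm_merge2)
  also have "\<dots> = (idn x \<otimes> lu D) \<cdot> (idn x \<otimes> (e \<otimes> idn D)) \<cdot> asc x (d \<odot> x) D \<cdot> (asc x d x \<otimes> idn D) \<cdot> inv (asc (x \<odot> d) x D) \<cdot> (c \<otimes> idn (x \<odot> D)) \<cdot> (idn one \<otimes> K) \<cdot> inv (ru one)"
    using nC chain2[OF nC] ob e c K by simp
  also have "\<dots> = (idn x \<otimes> lu D) \<cdot> asc x one D \<cdot> ((idn x \<otimes> e) \<otimes> idn D) \<cdot> (asc x d x \<otimes> idn D) \<cdot> inv (asc (x \<odot> d) x D) \<cdot> (c \<otimes> idn (x \<odot> D)) \<cdot> (idn one \<otimes> K) \<cdot> inv (ru one)"
    using nD chain2[OF nD] ob e c K by simp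
  also have "\<dots> = (ru x \<otimes> idn D) \<cdot> ((idn x \<otimes> e) \<otimes> idn D) \<cdot> (asc x d x \<otimes> idn D) \<cdot> inv (asc (x \<odot> d) x D) \<cdot> (c \<otimes> idn (x \<odot> D)) \<cdot> (idn one \<otimes> K) \<cdot> inv (ru one)"
    using tE chain2[OF tE] ob e c K by simp
  also have "\<dots> = (ru x \<otimes> idn D) \<cdot> ((idn x \<otimes> e) \<otimes> idn D) \<cdot> (asc x d x \<otimes> idn D) \<cdot> ((c \<otimes> idn x) \<otimes> idn D) \<cdot> inv (asc one x D) \<cdot> (idn one \<otimes> K) \<cdot> inv (ru one)"
    using nF chain2[OF nF] ob e c K by simp
  also have "\<dots> = ((ru x \<cdot> (idn x \<otimes> e) \<cdot> asc x d x \<cdot> (c \<otimes> idn x)) \<otimes> idn D) \<cdot> inv (asc one x D) \<cdot> (idn one \<otimes> K) \<cdot> inv (ru one)"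
    using ob e c K by (simp add: tm_merge tm_merge2)
  also have "\<dots> = (lu x \<otimes> idn D) \<cdot> inv (asc one x D) \<cdot> (idn one \<otimes> K) \<cdot> inv (ru one)"
    using t1' by simp
  also have "\<dots> = lu (x \<odot> D) \<cdot> (idn one \<otimes> K) \<cdot> inv (ru one)"
    using k1 chain2[OF k1] ob e c K by simp
  also have "\<dots> = K \<cdot> lu one \<cdot> inv (ru one)"
    using ln chain2[OF ln] ob e c K by simp
  also have "\<dots> = K" using K K3 by simp
  finally show ?thesis .
qed

end

context smdcat begin

definition isdual where "isdual x d e c \<longleftrightarrow> ob x \<and> ob d \<and> arr e \<and> sr e = d \<odot> x \<and> tg e = one \<and>
   arr c \<and> sr c = one \<and> tg c = x \<odot> d \<and> tri1 x d e c \<and> tri2 x d e c"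

lemma dual_inj:
  assumes x: "ob x" and d: "ob d" and e: "arr e" "sr e = d \<odot> x" "tg e = one"
    and c: "arr c" "sr c = one" "tg c = x \<odot> d" and t2: "tri2 x d e c"
    and p: "arr p" "sr p = d" "tg p = d" "(idn x \<otimes> p) \<cdot> c = c"
  shows "p = idn d"
proof -
  note ob = x d
  have T: "lu d \<cdot> (e \<otimes> idn d) \<cdot> inv (asc d x d) \<cdot> (idn d \<otimes> c) \<cdot> inv (ru d) = idn d"
    using t2 unfolding tri2_def .
  have ln: "lu d \<cdot> (idn one \<otimes> p) = p \<cdot> lu d" using lu_nat[OF p(1)] p by simp
  have an: "inv (asc d x d) \<cdot> (idn d \<otimes> (idn x \<otimes> p)) = (idn (d \<odot> x) \<otimes> p) \<cdot> inv (asc d x d)"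
    using asc_nat_inv[of "idn d" "idn x" p] ob p by simp
  have "p = p \<cdot> lu d \<cdot> (e \<otimes> idn d) \<cdot> inv (asc d x d) \<cdot> (idn d \<otimes> c) \<cdot> inv (ru d)"
    using T p by simp
  also have "\<dots> = lu d \<cdot> (idn one \<otimes> p) \<cdot> (e \<otimes> idn d) \<cdot> inv (asc d x d) \<cdot> (idn d \<otimes> c) \<cdot> inv (ru d)"
    using ln[symmetric] chain2[OF ln[symmetric]] ob p e c by simp
  also have "\<dots> = lu d \<cdot> (e \<otimes> idn d) \<cdot> (idn (d \<odot> x) \<otimes> p) \<cdot> inv (asc d x d) \<cdot> (idn d \<otimes> c) \<cdot> inv (ru d)"
    using ob p e c by (simp add: tm_merge tm_merge2)
  also have "\<dots> = lu d \<cdot> (e \<otimes> idn d) \<cdot> inv (asc d x d) \<cdot> (idn d \<otimes> (idn x \<otimes> p)) \<cdot> (idn d \<otimes> c) \<cdot> inv (ru d)"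
    using an[symmetric] chain2[OF an[symmetric]] ob p e c by simp
  also have "\<dots> = lu d \<cdot> (e \<otimes> idn d) \<cdot> inv (asc d x d) \<cdot> (idn d \<otimes> ((idn x \<otimes> p) \<cdot> c)) \<cdot> inv (ru d)"
    using ob p e c by (simp add: tm_merge tm_merge2)
  also have "\<dots> = idn d" using T p(4) by simp
  finally show ?thesis .
qed

lemma ev_inj_formula:
  assumes x: "ob x" and d: "ob d" and e: "arr e" "sr e = d \<odot> x" "tg e = one"
    and c: "arr c" "sr c = one" "tg c = x \<odot> d" and t2: "tri2 x d e c"
    and g: "arr g" "tg g = d"
  shows "g = lu d \<cdot> ((e \<cdot> (g \<otimes> idn x)) \<otimes> idn d) \<cdot> inv (asc (sr g) x d) \<cdot> (idn (sr g) \<otimes> c) \<cdot> inv (ru (sr g))"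
proof -
  note ob = x d
  have T: "lu d \<cdot> (e \<otimes> idn d) \<cdot> inv (asc d x d) \<cdot> (idn d \<otimes> c) \<cdot> inv (ru d) = idn d"
    using t2 unfolding tri2_def .
  have rn: "inv (ru d) \<cdot> g = (g \<otimes> idn one) \<cdot> inv (ru (sr g))" using ru_nat_inv[OF g(1)] g by simp
  have an: "inv (asc d x d) \<cdot> (g \<otimes> idn (x \<odot> d)) = ((g \<otimes> idn x) \<otimes> idn d) \<cdot> inv (asc (sr g) x d)"
    using asc_nat_inv[of g "idn x" "idn d"] ob g by simp
  have "(lu d \<cdot> (e \<otimes> idn d) \<cdot> inv (asc d x d) \<cdot> (idn d \<otimes> c) \<cdot> inv (ru d)) \<cdot> g = g"
    by (simp only: T) (simp add: g)
  then have "g = lu d \<cdot> (e \<otimes> idn d) \<cdot> inv (asc d x d) \<cdot> (idn d \<otimes> c) \<cdot> inv (ru d) \<cdot> g"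
    using g ob e c by simp
  also have "\<dots> = lu d \<cdot> (e \<otimes> idn d) \<cdot> inv (asc d x d) \<cdot> (idn d \<otimes> c) \<cdot> (g \<otimes> idn one) \<cdot> inv (ru (sr g))"
    using rn ob e c g by simp
  also have "\<dots> = lu d \<cdot> (e \<otimes> idn d) \<cdot> inv (asc d x d) \<cdot> (g \<otimes> idn (x \<odot> d)) \<cdot> (idn (sr g) \<otimes> c) \<cdot> inv (ru (sr g))"
    using ob e c g by (simp add: tm_merge tm_merge2)
  also have "\<dots> = lu d \<cdot> (e \<otimes> idn d) \<cdot> ((g \<otimes> idn x) \<otimes> idn d) \<cdot> inv (asc (sr g) x d) \<cdot> (idn (sr g) \<otimes> c) \<cdot> inv (ru (sr g))"
    using an chain2[OF an] ob e c g by simp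
  also have "\<dots> = lu d \<cdot> ((e \<cdot> (g \<otimes> idn x)) \<otimes> idn d) \<cdot> inv (asc (sr g) x d) \<cdot> (idn (sr g) \<otimes> c) \<cdot> inv (ru (sr g))"
    using ob e c g by (simp add: tm_merge tm_merge2)
  finally show ?thesis .
qed

end

context smdcat begin

lemma isdualD: "isdual x d e c \<Longrightarrow> ob x" "isdual x d e c \<Longrightarrow> ob d" "isdual x d e c \<Longrightarrow> arr e"
  "isdual x d e c \<Longrightarrow> sr e = d \<odot> x" "isdual x d e c \<Longrightarrow> tg e = one" "isdual x d e c \<Longrightarrow> arr c"
  "isdual x d e c \<Longrightarrow> sr c = one" "isdual x d e c \<Longrightarrow> tg c = x \<odot> d"
  "isdual x d e c \<Longrightarrow> tri1 x d e c" "isdual x d e c \<Longrightarrow> tri2 x d e c"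
  unfolding isdual_def by auto

lemma dual_unique:
  assumes A: "isdual x d e c" and B: "isdual x D E K"
  shows "\<exists>\<theta>. iso \<theta> \<and> sr \<theta> = d \<and> tg \<theta> = D \<and> K = (idn x \<otimes> \<theta>) \<cdot> c"
proof -
  note a = isdualD[OF A] and b = isdualD[OF B]
  define \<theta> where "\<theta> = lu D \<cdot> (e \<otimes> idn D) \<cdot> inv (asc d x D) \<cdot> (idn d \<otimes> K) \<cdot> inv (ru d)"
  define \<theta>' where "\<theta>' = lu d \<cdot> (E \<otimes> idn d) \<cdot> inv (asc D x d) \<cdot> (idn D \<otimes> c) \<cdot> inv (ru D)"
  have r1: "(idn x \<otimes> \<theta>) \<cdot> c = K" unfolding \<theta>_def
    by (rule dual_rel) (use a b in simp_all)
  have r2: "(idn x \<otimes> \<theta>') \<cdot> K = c" unfolding \<theta>'_def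
    by (rule dual_rel) (use a b in simp_all)
  have th: "arr \<theta>" "sr \<theta> = d" "tg \<theta> = D" unfolding \<theta>_def using a b by simp_all
  have th': "arr \<theta>'" "sr \<theta>' = D" "tg \<theta>' = d" unfolding \<theta>'_def using a b by simp_all
  have "(idn x \<otimes> (\<theta>' \<cdot> \<theta>)) \<cdot> c = (idn x \<otimes> \<theta>') \<cdot> (idn x \<otimes> \<theta>) \<cdot> c"
    using a b th th' by (simp add: tm_merge tm_merge2)
  also have "\<dots> = c" using r1 r2 by simp
  finally have 1: "\<theta>' \<cdot> \<theta> = idn d"
    by (intro dual_inj[of x d e c]) (use a b th th' in simp_all)
  have "(idn x \<otimes> (\<theta> \<cdot> \<theta>')) \<cdot> K = (idn x \<otimes> \<theta>) \<cdot> (idn x \<otimes> \<theta>') \<cdot> K"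
    using a b th th' by (simp add: tm_merge tm_merge2)
  also have "\<dots> = K" using r1 r2 by simp
  finally have 2: "\<theta> \<cdot> \<theta>' = idn D"
    by (intro dual_inj[of x D E K]) (use a b th th' in simp_all)
  have "iso \<theta>" by (rule isoI[of \<theta> \<theta>']) (use th th' 1 2 in simp_all)
  then show ?thesis using th r1 by metis
qed

definition lamf where
  "lamf x d c = lu d \<cdot> (dag c \<otimes> idn d) \<cdot> (br d x \<otimes> idn d) \<cdot> inv (asc d x d) \<cdot> (idn d \<otimes> c) \<cdot> inv (ru d)"

lemma lamf_ar:
  assumes "ob x" "ob d" "arr c" "sr c = one" "tg c = x \<odot> d"
  shows "arr (lamf x d c)" "sr (lamf x d c) = d" "tg (lamf x d c) = d"
  unfolding lamf_def using assms by simp_all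

lemma lamf_transport:
  assumes x: "ob x" and d: "ob d" and D: "ob D" and c: "arr c" "sr c = one" "tg c = x \<odot> d"
    and t: "arr t" "sr t = d" "tg t = D"
  shows "lamf x D ((idn x \<otimes> t) \<cdot> c) = t \<cdot> lamf x d c \<cdot> dag t"
proof -
  note ob = x d D
  define A where "A = dag c \<cdot> br d x"
  have A: "arr A" "sr A = d \<odot> x" "tg A = one" unfolding A_def using ob c by simp_all
  have bn: "(idn x \<otimes> dag t) \<cdot> br D x = br d x \<cdot> (dag t \<otimes> idn x)"
    using br_nat[of "dag t" "idn x"] ob t by simp
  have an1: "inv (asc D x D) \<cdot> (idn D \<otimes> (idn x \<otimes> t)) = (idn (D \<odot> x) \<otimes> t) \<cdot> inv (asc D x d)"
    using asc_nat_inv[of "idn D" "idn x" t] ob t by simp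
  have an2: "inv (asc d x d) \<cdot> (dag t \<otimes> idn (x \<odot> d)) = ((dag t \<otimes> idn x) \<otimes> idn d) \<cdot> inv (asc D x d)"
    using asc_nat_inv[of "dag t" "idn x" "idn d"] ob t by simp
  have ln: "lu D \<cdot> (idn one \<otimes> t) = t \<cdot> lu d" using lu_nat[OF t(1)] t by simp
  have rn: "inv (ru d) \<cdot> dag t = (dag t \<otimes> idn one) \<cdot> inv (ru D)" using ru_nat_inv[of "dag t"] t by simp
  have "lamf x D ((idn x \<otimes> t) \<cdot> c) = lu D \<cdot> ((dag c \<cdot> (idn x \<otimes> dag t) \<cdot> br D x) \<otimes> idn D) \<cdot> inv (asc D x D) \<cdot> (idn D \<otimes> (idn x \<otimes> t)) \<cdot> (idn D \<otimes> c) \<cdot> inv (ru D)"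
    unfolding lamf_def using ob c t by (simp add: tm_merge tm_merge2)
  also have "\<dots> = lu D \<cdot> ((A \<cdot> (dag t \<otimes> idn x)) \<otimes> idn D) \<cdot> inv (asc D x D) \<cdot> (idn D \<otimes> (idn x \<otimes> t)) \<cdot> (idn D \<otimes> c) \<cdot> inv (ru D)"
    unfolding A_def using bn chain2[OF bn] ob c t by simp
  also have "\<dots> = lu D \<cdot> ((A \<cdot> (dag t \<otimes> idn x)) \<otimes> idn D) \<cdot> (idn (D \<odot> x) \<otimes> t) \<cdot> inv (asc D x d) \<cdot> (idn D \<otimes> c) \<cdot> inv (ru D)"
    using an1 chain2[OF an1] ob c t A by simp
  also have "\<dots> = lu D \<cdot> (idn one \<otimes> t) \<cdot> (A \<otimes> idn d) \<cdot> ((dag t \<otimes> idn x) \<otimes> idn d) \<cdot> inv (asc D x d) \<cdot> (idn D \<otimes> c) \<cdot> inv (ru D)"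
    using ob c t A by (simp add: tm_merge tm_merge2)
  also have "\<dots> = t \<cdot> lu d \<cdot> (A \<otimes> idn d) \<cdot> inv (asc d x d) \<cdot> (dag t \<otimes> idn (x \<odot> d)) \<cdot> (idn D \<otimes> c) \<cdot> inv (ru D)"
    using ln chain2[OF ln] an2[symmetric] chain2[OF an2[symmetric]] ob c t A by simp
  also have "\<dots> = t \<cdot> lu d \<cdot> (A \<otimes> idn d) \<cdot> inv (asc d x d) \<cdot> (idn d \<otimes> c) \<cdot> (dag t \<otimes> idn one) \<cdot> inv (ru D)"
    using ob c t A by (simp add: tm_merge tm_merge2)
  also have "\<dots> = t \<cdot> lu d \<cdot> (A \<otimes> idn d) \<cdot> inv (asc d x d) \<cdot> (idn d \<otimes> c) \<cdot> inv (ru d) \<cdot> dag t"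
    using rn[symmetric] chain2[OF rn[symmetric]] ob c t A by simp
  also have "\<dots> = t \<cdot> lamf x d c \<cdot> dag t"
    unfolding lamf_def A_def using ob c t by (simp add: tm_merge tm_merge2)
  finally show ?thesis .
qed

end

context smdcat begin

lemma duals_isdual:
  assumes "has_duals C" "ob x"
  shows "isdual x (dualo C x) (evl C x) (coevl C x)"
proof -
  have h: "dualo C x \<in> obs C \<and>
        evl C x \<in> hom C (tno C (dualo C x) x) (unito C) \<and>
        coevl C x \<in> hom C (unito C) (tno C x (dualo C x)) \<and>
        cmp C (runit C x) (cmp C (tnm C (ident C x) (evl C x))
          (cmp C (alpha C x (dualo C x) x)
            (cmp C (tnm C (coevl C x) (ident C x)) (inv_ar C (lunit C x))))) = ident C x \<and>
        cmp C (lunit C (dualo C x)) (cmp C (tnm C (evl C x) (ident C (dualo C x)))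
          (cmp C (inv_ar C (alpha C (dualo C x) x (dualo C x)))
            (cmp C (tnm C (ident C (dualo C x)) (coevl C x)) (inv_ar C (runit C (dualo C x))))))
          = ident C (dualo C x)"
    using assms unfolding has_duals_def by blast
  then show ?thesis unfolding isdual_def tri1_def tri2_def hom_iff using assms(2) by simp
qed

lemma dual_ar_idn:
  assumes "has_duals C" "ob x"
  shows "dual_ar C (idn x) = idn (dualo C x)"
proof -
  note A = isdualD[OF duals_isdual[OF assms]]
  let ?d = "dualo C x" and ?e = "evl C x" and ?c = "coevl C x"
  have u: "g = idn ?d" if g: "g \<in> hom C ?d ?d \<and> ?e \<cdot> (g \<otimes> idn x) = ?e \<cdot> (idn ?d \<otimes> idn x)" for g
  proof -
    have g1: "arr g" "sr g = ?d" "tg g = ?d" using g by (auto simp: hom_iff)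
    have eg: "?e \<cdot> (g \<otimes> idn x) = ?e" using g A by simp
    have "g = lu ?d \<cdot> ((?e \<cdot> (g \<otimes> idn x)) \<otimes> idn ?d) \<cdot> inv (asc (sr g) x ?d) \<cdot> (idn (sr g) \<otimes> ?c) \<cdot> inv (ru (sr g))"
      by (rule ev_inj_formula) (use A g1 in simp_all)
    also have "\<dots> = lu ?d \<cdot> ((?e \<cdot> (idn ?d \<otimes> idn x)) \<otimes> idn ?d) \<cdot> inv (asc (sr (idn ?d)) x ?d) \<cdot> (idn (sr (idn ?d)) \<otimes> ?c) \<cdot> inv (ru (sr (idn ?d)))"
      using eg g1 A by simp
    also have "\<dots> = idn ?d"
      by (rule ev_inj_formula[symmetric]) (use A in simp_all)
    finally show ?thesis .
  qed
  show ?thesis unfolding dual_ar_def using A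
    apply simp
    apply (rule the_equality)
     apply (simp add: hom_iff)
    using u by simp
qed

lemma lam_eq: "lam C x = lamf x (dualo C x) (coevl C x)"
  unfolding lam_def lamf_def Let_def by simp

lemma tri1_inj:
  assumes x: "ob x" and d: "ob d" and e: "arr e" "sr e = d \<odot> x" "tg e = one"
    and c: "arr c" "sr c = one" "tg c = x \<odot> d" and t1: "tri1 x d e c"
    and f: "arr f" "sr f = x" "tg f = x"
  shows "f = ru x \<cdot> (idn x \<otimes> (e \<cdot> (idn d \<otimes> f))) \<cdot> asc x d x \<cdot> (c \<otimes> idn x) \<cdot> inv (lu x)"
proof -
  note ob = x d
  have T: "ru x \<cdot> (idn x \<otimes> e) \<cdot> asc x d x \<cdot> (c \<otimes> idn x) \<cdot> inv (lu x) = idn x"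
    using t1 unfolding tri1_def .
  have ln: "inv (lu x) \<cdot> f = (idn one \<otimes> f) \<cdot> inv (lu x)" using lu_nat_inv[OF f(1)] f by simp
  have an: "asc x d x \<cdot> (idn (x \<odot> d) \<otimes> f) = (idn x \<otimes> (idn d \<otimes> f)) \<cdot> asc x d x"
    using asc_nat[of "idn x" "idn d" f] ob f by simp
  have "(ru x \<cdot> (idn x \<otimes> e) \<cdot> asc x d x \<cdot> (c \<otimes> idn x) \<cdot> inv (lu x)) \<cdot> f = f"
    by (simp only: T) (simp add: f)
  then have "f = ru x \<cdot> (idn x \<otimes> e) \<cdot> asc x d x \<cdot> (c \<otimes> idn x) \<cdot> inv (lu x) \<cdot> f"
    using f ob e c by simp
  also have "\<dots> = ru x \<cdot> (idn x \<otimes> e) \<cdot> asc x d x \<cdot> (c \<otimes> idn x) \<cdot> (idn one \<otimes> f) \<cdot> inv (lu x)"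
    using ln ob e c f by simp
  also have "\<dots> = ru x \<cdot> (idn x \<otimes> e) \<cdot> asc x d x \<cdot> (idn (x \<odot> d) \<otimes> f) \<cdot> (c \<otimes> idn x) \<cdot> inv (lu x)"
    using ob e c f by (simp add: tm_merge tm_merge2)
  also have "\<dots> = ru x \<cdot> (idn x \<otimes> e) \<cdot> (idn x \<otimes> (idn d \<otimes> f)) \<cdot> asc x d x \<cdot> (c \<otimes> idn x) \<cdot> inv (lu x)"
    using an chain2[OF an] ob e c f by simp
  also have "\<dots> = ru x \<cdot> (idn x \<otimes> (e \<cdot> (idn d \<otimes> f))) \<cdot> asc x d x \<cdot> (c \<otimes> idn x) \<cdot> inv (lu x)"
    using ob e c f by (simp add: tm_merge tm_merge2)
  finally show ?thesis .
qed

lemma Zparts: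
  assumes "is_unitary_Z2_action C"
  shows "\<forall>a \<in> obs C. parity C a \<in> hom C a a \<and> is_unitary C (parity C a) a a \<and>
        cmp C (parity C a) (parity C a) = ident C a"
    "\<forall>a \<in> obs C. \<forall>b \<in> obs C. \<forall>f \<in> hom C a b. cmp C (parity C b) f = cmp C f (parity C a)"
    "\<forall>a \<in> obs C. \<forall>b \<in> obs C. parity C (tno C a b) = tnm C (parity C a) (parity C b)"
    "parity C (unito C) = ident C (unito C)"
  using assms unfolding is_unitary_Z2_action_def by blast+

lemma par_ar:
  assumes Z: "is_unitary_Z2_action C" and a: "ob a"
  shows "arr (parity C a)" "sr (parity C a) = a" "tg (parity C a) = a" "iso (parity C a)"
    "parity C a \<cdot> parity C a = idn a" "dag (parity C a) = parity C a"
proof -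
  have h: "parity C a \<in> hom C a a \<and> is_unitary C (parity C a) a a \<and> parity C a \<cdot> parity C a = idn a"
    using Zparts(1)[OF Z] a by blast
  then show "arr (parity C a)" "sr (parity C a) = a" "tg (parity C a) = a" "iso (parity C a)"
    "parity C a \<cdot> parity C a = idn a" by (auto simp: hom_iff is_unitary_iff)
  have "dag (parity C a) = inv (parity C a)" using h by (auto simp: is_unitary_iff)
  moreover have "inv (parity C a) = parity C a" using h by (intro inv_unique) (auto simp: hom_iff is_unitary_iff)
  ultimately show "dag (parity C a) = parity C a" by simp
qed

lemma par_nat:
  assumes Z: "is_unitary_Z2_action C" and f: "arr f"
  shows "parity C (tg f) \<cdot> f = f \<cdot> parity C (sr f)"
proof -
  have "f \<in> hom C (sr f) (tg f)" using f by (simp add: hom_iff)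
  then show ?thesis using Zparts(2)[OF Z, rule_format, of "sr f" "tg f" f] f by simp
qed

lemma par_tob: "is_unitary_Z2_action C \<Longrightarrow> ob a \<Longrightarrow> ob b \<Longrightarrow> parity C (a \<odot> b) = parity C a \<otimes> parity C b"
  using Zparts(3) by blast
lemma par_one: "is_unitary_Z2_action C \<Longrightarrow> parity C one = idn one"
  using Zparts(4) by blast

lemma ev_parity:
  assumes Z: "is_unitary_Z2_action C" and a: "ob a" "ob b" and e: "arr e" "sr e = a \<odot> b" "tg e = one"
  shows "e \<cdot> (parity C a \<otimes> idn b) = e \<cdot> (idn a \<otimes> parity C b)"
proof -
  note pa = par_ar[OF Z a(1)] and pb = par_ar[OF Z a(2)]
  have "parity C (tg e) \<cdot> e = e \<cdot> parity C (sr e)" by (rule par_nat[OF Z e(1)])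
  then have 1: "e = e \<cdot> (parity C a \<otimes> parity C b)" using e par_one[OF Z] par_tob[OF Z a] by simp
  have "e \<cdot> (parity C a \<otimes> idn b) = (e \<cdot> (parity C a \<otimes> parity C b)) \<cdot> (parity C a \<otimes> idn b)"
    using 1 by simp
  also have "\<dots> = e \<cdot> (idn a \<otimes> parity C b)"
    using e pa pb a by (simp add: tm_merge)
  finally show ?thesis .
qed

lemma iso_positive_iff: "iso_positive C f c \<longleftrightarrow> arr f \<and> sr f = c \<and> tg f = c \<and>
   (\<exists>c' G. ob c' \<and> iso G \<and> sr G = c \<and> tg G = c' \<and> f = dag G \<cdot> G)"
  unfolding iso_positive_def is_iso_iff hom_iff by blast

lemma pos_conj:
  assumes P: "iso_positive C P a" and t: "iso t" "tg t = a"
  shows "iso_positive C (dag t \<cdot> P \<cdot> t) (sr t)"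
proof -
  obtain c' G where G: "ob c'" "iso G" "sr G = a" "tg G = c'" "P = dag G \<cdot> G" and P1: "arr P" "sr P = a" "tg P = a"
    using P unfolding iso_positive_iff by blast
  have at: "arr t" using t iso_arr by blast
  have aG: "arr G" using G iso_arr by blast
  have "dag t \<cdot> P \<cdot> t = dag (G \<cdot> t) \<cdot> (G \<cdot> t)" using G at aG t by simp
  moreover have "iso (G \<cdot> t)" using G t at aG by simp
  ultimately show ?thesis unfolding iso_positive_iff using G t at aG P1
    by (intro conjI exI[of _ c'] exI[of _ "G \<cdot> t"]) simp_all
qed

lemma pos_invol:
  assumes H: "\<forall>c \<in> obs C. \<forall>j. iso_positive C j c \<and> is_involution C j c \<longrightarrow> j = ident C c"
    and A: "iso_positive C A d" and Aw: "iso_positive C (A \<cdot> w) d"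
    and w: "arr w" "sr w = d" "tg w = d" "w \<cdot> w = idn d"
  shows "w = idn d"
proof -
  obtain c G where G: "ob c" "iso G" "sr G = d" "tg G = c" "A = dag G \<cdot> G" and A1: "arr A" "sr A = d" "tg A = d"
    using A unfolding iso_positive_iff by blast
  obtain c2 K where K: "ob c2" "iso K" "sr K = d" "tg K = c2" "A \<cdot> w = dag K \<cdot> K"
    using Aw unfolding iso_positive_iff by blast
  have aG: "arr G" "arr K" using G K iso_arr by auto
  define M where "M = G \<cdot> w \<cdot> inv G"
  have M1: "arr M" "sr M = c" "tg M = c" unfolding M_def using G w aG by simp_all
  have dd: "dag (inv G) \<cdot> dag G = idn c"
  proof -
    have "dag (inv G) \<cdot> dag G = dag (G \<cdot> inv G)" by (rule dag_cp[symmetric]) (use G aG in simp_all)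
    then show ?thesis using G aG by simp
  qed
  have "dag (K \<cdot> inv G) \<cdot> (K \<cdot> inv G) = dag (inv G) \<cdot> (dag K \<cdot> K) \<cdot> inv G"
    using G K aG by simp
  also have "\<dots> = dag (inv G) \<cdot> (dag G \<cdot> G \<cdot> w) \<cdot> inv G"
    using K(5)[symmetric] G(5) G aG w by simp
  also have "\<dots> = (dag (inv G) \<cdot> dag G) \<cdot> G \<cdot> w \<cdot> inv G"
    using G aG w by simp
  also have "\<dots> = M" unfolding M_def using dd G aG w by simp
  finally have Mpos: "M = dag (K \<cdot> inv G) \<cdot> (K \<cdot> inv G)" by simp
  have "iso_positive C M c" unfolding iso_positive_iff using M1 K G aG
    by (intro conjI exI[of _ c2] exI[of _ "K \<cdot> inv G"]) (simp_all add: Mpos)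
  moreover have "M \<cdot> M = idn c"
  proof -
    have "M \<cdot> M = G \<cdot> w \<cdot> w \<cdot> inv G" unfolding M_def using G aG w(1-3) by simp
    then show ?thesis using w G aG chain2[OF w(4)] by simp
  qed
  ultimately have "M = idn c" using H G(1) M1 unfolding is_involution_def hom_iff by blast
  then have "inv G \<cdot> M \<cdot> G = inv G \<cdot> idn c \<cdot> G" by simp
  then show ?thesis unfolding M_def using G aG w by simp
qed

end

context smdcat begin
lemma solve_r: "X \<cdot> Y = Z \<Longrightarrow> iso Y \<Longrightarrow> arr X \<Longrightarrow> sr X = tg Y \<Longrightarrow> X = Z \<cdot> inv Y"
proof -
  assume a: "X \<cdot> Y = Z" "iso Y" "arr X" "sr X = tg Y"
  have "(X \<cdot> Y) \<cdot> inv Y = Z \<cdot> inv Y" by (simp only: a(1))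
  then show ?thesis using a(2-4) iso_arr[OF a(2)] by simp
qed
end

locale smfun = smdcat D for D :: "('o2,'m2,'z2) smdc_scheme" +
  fixes C :: "('o1,'m1,'z1) smdc_scheme" and F :: "('o1,'m1,'o2,'m2,'z) smfun_scheme"
  assumes smC: "is_sym_monoidal_dagger C"
    and FF: "is_sm_dagger_functor C D F"
begin

interpretation C: smdcat C by (rule smdcat.intro, rule smC)
no_notation C.cp (infixr "\<cdot>" 55)
no_notation C.tm (infixr "\<otimes>" 60)
no_notation C.tob (infixr "\<odot>" 60)
notation cp (infixr "\<cdot>" 55)
notation tm (infixr "\<otimes>" 60)
notation tob (infixr "\<odot>" 60)

abbreviation Fa where "Fa \<equiv> far F"
abbreviation Fo where "Fo \<equiv> fob F"
abbreviation mu where "mu \<equiv> fmu F"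
abbreviation eps where "eps \<equiv> feps F"

lemma fp1: "(\<forall>a \<in> obs C. fob F a \<in> obs D)"
  using FF unfolding is_sm_dagger_functor_def by (elim conjE) assumption
lemma fp2: "(\<forall>a \<in> obs C. \<forall>b \<in> obs C. \<forall>f \<in> hom C a b. far F f \<in> hom D (fob F a) (fob F b))"
  using FF unfolding is_sm_dagger_functor_def by (elim conjE) assumption
lemma fp3: "(\<forall>a \<in> obs C. far F (ident C a) = ident D (fob F a))"
  using FF unfolding is_sm_dagger_functor_def by (elim conjE) assumption
lemma fp4: "(\<forall>a \<in> obs C. \<forall>b \<in> obs C. \<forall>c \<in> obs C. \<forall>f \<in> hom C a b. \<forall>g \<in> hom C b c.
        far F (cmp C g f) = cmp D (far F g) (far F f))"
  using FF unfolding is_sm_dagger_functor_def by (elim conjE) assumption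
lemma fp5: "(\<forall>a \<in> obs C. \<forall>b \<in> obs C. \<forall>f \<in> hom C a b. far F (dg C f) = dg D (far F f))"
  using FF unfolding is_sm_dagger_functor_def by (elim conjE) assumption
lemma fp6: "(\<forall>a \<in> obs C. \<forall>b \<in> obs C.
        is_unitary D (fmu F a b) (tno D (fob F a) (fob F b)) (fob F (tno C a b)))"
  using FF unfolding is_sm_dagger_functor_def by (elim conjE) assumption
lemma fp7: "is_unitary D (feps F) (unito D) (fob F (unito C))"
  using FF unfolding is_sm_dagger_functor_def by (elim conjE) assumption
lemma fp8: "(\<forall>a \<in> obs C. \<forall>b \<in> obs C. \<forall>a' \<in> obs C. \<forall>b' \<in> obs C.
        \<forall>f \<in> hom C a a'. \<forall>g \<in> hom C b b'.
        cmp D (far F (tnm C f g)) (fmu F a b) = cmp D (fmu F a' b') (tnm D (far F f) (far F g)))"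
  using FF unfolding is_sm_dagger_functor_def by (elim conjE) assumption
lemma fp9: "(\<forall>a \<in> obs C. \<forall>b \<in> obs C. \<forall>c \<in> obs C.
        cmp D (far F (alpha C a b c))
          (cmp D (fmu F (tno C a b) c) (tnm D (fmu F a b) (ident D (fob F c)))) =
        cmp D (fmu F a (tno C b c))
          (cmp D (tnm D (ident D (fob F a)) (fmu F b c))
            (alpha D (fob F a) (fob F b) (fob F c))))"
  using FF unfolding is_sm_dagger_functor_def by (elim conjE) assumption
lemma fp10: "(\<forall>a \<in> obs C.
        cmp D (far F (lunit C a)) (cmp D (fmu F (unito C) a) (tnm D (feps F) (ident D (fob F a))))
          = lunit D (fob F a) \<and>
        cmp D (far F (runit C a)) (cmp D (fmu F a (unito C)) (tnm D (ident D (fob F a)) (feps F)))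
          = runit D (fob F a))"
  using FF unfolding is_sm_dagger_functor_def by (elim conjE) assumption
lemma fp11: "(\<forall>a \<in> obs C. \<forall>b \<in> obs C.
        cmp D (far F (braid C a b)) (fmu F a b) =
        cmp D (fmu F b a) (braid D (fob F a) (fob F b)))"
  using FF unfolding is_sm_dagger_functor_def by (elim conjE) assumption

lemma Fo_ob[simp]: "C.ob a \<Longrightarrow> ob (Fo a)" using fp1 by auto

lemma Fa_ar[simp]: "C.arr f \<Longrightarrow> arr (Fa f)" "C.arr f \<Longrightarrow> sr (Fa f) = Fo (C.sr f)" "C.arr f \<Longrightarrow> tg (Fa f) = Fo (C.tg f)"
proof -
  assume a: "C.arr f"
  have "f \<in> hom C (C.sr f) (C.tg f)" using a by (simp add: C.hom_iff)
  then have "Fa f \<in> hom D (Fo (C.sr f)) (Fo (C.tg f))" using fp2[rule_format, of "C.sr f" "C.tg f" f] a by simp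
  then show "arr (Fa f)" "sr (Fa f) = Fo (C.sr f)" "tg (Fa f) = Fo (C.tg f)" by (simp_all add: hom_iff)
qed

lemma F_idn[simp]: "C.ob a \<Longrightarrow> Fa (C.idn a) = idn (Fo a)" using fp3 by auto

lemma F_cp[simp]: "C.arr f \<Longrightarrow> C.arr g \<Longrightarrow> C.tg f = C.sr g \<Longrightarrow> Fa (cmp C g f) = Fa g \<cdot> Fa f"
proof -
  assume a: "C.arr f" "C.arr g" "C.tg f = C.sr g"
  have "f \<in> hom C (C.sr f) (C.tg f)" "g \<in> hom C (C.tg f) (C.tg g)" using a by (simp_all add: C.hom_iff)
  then show ?thesis using fp4[rule_format, of "C.sr f" "C.tg f" "C.tg g" f g] a by simp
qed

lemma F_dag[simp]: "C.arr f \<Longrightarrow> Fa (dg C f) = dag (Fa f)"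
proof -
  assume a: "C.arr f"
  have "f \<in> hom C (C.sr f) (C.tg f)" using a by (simp_all add: C.hom_iff)
  then show ?thesis using fp5[rule_format, of "C.sr f" "C.tg f" f] a by simp
qed

lemma mu_props[simp]: "C.ob a \<Longrightarrow> C.ob b \<Longrightarrow> iso (mu a b)" "C.ob a \<Longrightarrow> C.ob b \<Longrightarrow> arr (mu a b)"
  "C.ob a \<Longrightarrow> C.ob b \<Longrightarrow> sr (mu a b) = Fo a \<odot> Fo b" "C.ob a \<Longrightarrow> C.ob b \<Longrightarrow> tg (mu a b) = Fo (tno C a b)"
  "C.ob a \<Longrightarrow> C.ob b \<Longrightarrow> dag (mu a b) = inv (mu a b)"
  using fp6 unfolding is_unitary_iff by (auto simp: iso_arr)

lemma eps_props[simp]: "iso eps" "arr eps" "sr eps = one" "tg eps = Fo (unito C)" "dag eps = inv eps"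
  using fp7 unfolding is_unitary_iff by (auto simp: iso_arr)

lemma F_inv_l: "C.iso f \<Longrightarrow> Fa (C.inv f) \<cdot> Fa f = idn (Fo (C.sr f))"
proof -
  assume a: "C.iso f"
  have "Fa (cmp C (C.inv f) f) = Fa (C.inv f) \<cdot> Fa f" by (rule F_cp) (use a C.iso_arr[OF a] in simp_all)
  moreover have "cmp C (C.inv f) f = C.idn (C.sr f)" using a by simp
  ultimately show ?thesis using a C.iso_arr[OF a] by simp
qed

lemma F_inv_r: "C.iso f \<Longrightarrow> Fa f \<cdot> Fa (C.inv f) = idn (Fo (C.tg f))"
proof -
  assume a: "C.iso f"
  have "Fa (cmp C f (C.inv f)) = Fa f \<cdot> Fa (C.inv f)" by (rule F_cp) (use a C.iso_arr[OF a] in simp_all)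
  moreover have "cmp C f (C.inv f) = C.idn (C.tg f)" using a by simp
  ultimately show ?thesis using a C.iso_arr[OF a] by simp
qed

lemma F_iso: "C.iso f \<Longrightarrow> iso (Fa f)"
  by (rule isoI[of _ "Fa (C.inv f)"]) (use C.iso_arr F_inv_l F_inv_r in simp_all)

lemma F_inv[simp]: "C.iso f \<Longrightarrow> Fa (C.inv f) = inv (Fa f)"
  by (rule sym, rule inv_unique) (use C.iso_arr F_inv_l F_iso in simp_all)

lemma Ftens[simp]: "C.arr f \<Longrightarrow> C.arr g \<Longrightarrow> Fa (tnm C f g) = mu (C.tg f) (C.tg g) \<cdot> (Fa f \<otimes> Fa g) \<cdot> inv (mu (C.sr f) (C.sr g))"
proof -
  assume a: "C.arr f" "C.arr g"
  have "f \<in> hom C (C.sr f) (C.tg f)" "g \<in> hom C (C.sr g) (C.tg g)" using a by (simp_all add: C.hom_iff)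
  then have "Fa (tnm C f g) \<cdot> mu (C.sr f) (C.sr g) = mu (C.tg f) (C.tg g) \<cdot> (Fa f \<otimes> Fa g)"
    using fp8[rule_format, of "C.sr f" "C.sr g" "C.tg f" "C.tg g" f g] a by simp
  then have "Fa (tnm C f g) = (mu (C.tg f) (C.tg g) \<cdot> (Fa f \<otimes> Fa g)) \<cdot> inv (mu (C.sr f) (C.sr g))"
    by (rule solve_r) (use a in simp_all)
  then show ?thesis using a by simp
qed

lemma Flu[simp]: "C.ob a \<Longrightarrow> Fa (lunit C a) = lu (Fo a) \<cdot> (inv eps \<otimes> idn (Fo a)) \<cdot> inv (mu (unito C) a)"
proof -
  assume a: "C.ob a"
  have "Fa (lunit C a) \<cdot> (mu (unito C) a \<cdot> (eps \<otimes> idn (Fo a))) = lu (Fo a)" using fp10 a by auto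
  then have "Fa (lunit C a) = lu (Fo a) \<cdot> inv (mu (unito C) a \<cdot> (eps \<otimes> idn (Fo a)))"
    by (rule solve_r) (use a in simp_all)
  then show ?thesis using a by simp
qed

lemma Fru[simp]: "C.ob a \<Longrightarrow> Fa (runit C a) = ru (Fo a) \<cdot> (idn (Fo a) \<otimes> inv eps) \<cdot> inv (mu a (unito C))"
proof -
  assume a: "C.ob a"
  have "Fa (runit C a) \<cdot> (mu a (unito C) \<cdot> (idn (Fo a) \<otimes> eps)) = ru (Fo a)" using fp10 a by auto
  then have "Fa (runit C a) = ru (Fo a) \<cdot> inv (mu a (unito C) \<cdot> (idn (Fo a) \<otimes> eps))"
    by (rule solve_r) (use a in simp_all)
  then show ?thesis using a by simp
qed

lemma Fasc[simp]: "C.ob a \<Longrightarrow> C.ob b \<Longrightarrow> C.ob c \<Longrightarrow> Fa (alpha C a b c) =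
   mu a (tno C b c) \<cdot> (idn (Fo a) \<otimes> mu b c) \<cdot> asc (Fo a) (Fo b) (Fo c) \<cdot> (inv (mu a b) \<otimes> idn (Fo c)) \<cdot> inv (mu (tno C a b) c)"
proof -
  assume a: "C.ob a" "C.ob b" "C.ob c"
  have "Fa (alpha C a b c) \<cdot> (mu (tno C a b) c \<cdot> (mu a b \<otimes> idn (Fo c))) = mu a (tno C b c) \<cdot> (idn (Fo a) \<otimes> mu b c) \<cdot> asc (Fo a) (Fo b) (Fo c)"
    using fp9 a by auto
  then have "Fa (alpha C a b c) = (mu a (tno C b c) \<cdot> (idn (Fo a) \<otimes> mu b c) \<cdot> asc (Fo a) (Fo b) (Fo c)) \<cdot> inv (mu (tno C a b) c \<cdot> (mu a b \<otimes> idn (Fo c)))"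
    by (rule solve_r) (use a in simp_all)
  then show ?thesis using a by simp
qed

lemma Fbr[simp]: "C.ob a \<Longrightarrow> C.ob b \<Longrightarrow> Fa (braid C a b) = mu b a \<cdot> br (Fo a) (Fo b) \<cdot> inv (mu a b)"
proof -
  assume a: "C.ob a" "C.ob b"
  have "Fa (braid C a b) \<cdot> mu a b = mu b a \<cdot> br (Fo a) (Fo b)" using fp11 a by auto
  then have "Fa (braid C a b) = (mu b a \<cdot> br (Fo a) (Fo b)) \<cdot> inv (mu a b)" by (rule solve_r) (use a in simp_all)
  then show ?thesis using a by simp
qed

end

context smdcat begin
lemma dag_inv_unitary: "iso f \<Longrightarrow> dag f = inv f \<Longrightarrow> dag (inv f) = f"
  by (metis dag_ar(4) iso_arr)
lemma dag_inv_struct[simp]: "ob a \<Longrightarrow> ob b \<Longrightarrow> ob c \<Longrightarrow> dag (inv (asc a b c)) = asc a b c"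
  "ob a \<Longrightarrow> dag (inv (lu a)) = lu a" "ob a \<Longrightarrow> dag (inv (ru a)) = ru a"
  "ob a \<Longrightarrow> ob b \<Longrightarrow> dag (inv (br a b)) = br a b"
  by (simp_all add: dag_inv_unitary)
end

context smfun begin
interpretation C: smdcat C by (rule smdcat.intro, rule smC)
no_notation C.cp (infixr "\<cdot>" 55)
no_notation C.tm (infixr "\<otimes>" 60)
no_notation C.tob (infixr "\<odot>" 60)
notation cp (infixr "\<cdot>" 55)
notation tm (infixr "\<otimes>" 60)
notation tob (infixr "\<odot>" 60)

lemma dag_inv_mu[simp]: "C.ob a \<Longrightarrow> C.ob b \<Longrightarrow> dag (inv (mu a b)) = mu a b"
  by (simp add: dag_inv_unitary)
lemma dag_inv_eps[simp]: "dag (inv eps) = eps"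
  by (simp add: dag_inv_unitary)

lemma F_lamf:
  assumes x: "C.ob x" and d: "C.ob d" and c: "C.arr c" "C.sr c = unito C" "C.tg c = tno C x d"
  shows "Fa (C.lamf x d c) = lamf (Fo x) (Fo d) (inv (mu x d) \<cdot> Fa c \<cdot> eps)"
  unfolding C.lamf_def lamf_def using x d c by (simp add: tm_merge tm_merge2)


lemma F_tri1:
  assumes x: "C.ob x" and d: "C.ob d" and e: "C.arr e" "C.sr e = tno C d x" "C.tg e = unito C"
    and c: "C.arr c" "C.sr c = unito C" "C.tg c = tno C x d" and t: "C.tri1 x d e c"
  shows "tri1 (Fo x) (Fo d) (inv eps \<cdot> Fa e \<cdot> mu d x) (inv (mu x d) \<cdot> Fa c \<cdot> eps)"
proof -
  have "Fa (cmp C (runit C x) (cmp C (tnm C (ident C x) e) (cmp C (alpha C x d x) (cmp C (tnm C c (ident C x)) (C.inv (lunit C x)))))) = Fa (ident C x)"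
    using t unfolding C.tri1_def by simp
  then show ?thesis unfolding tri1_def using x d e c by (simp add: tm_merge tm_merge2)
qed

lemma F_tri2:
  assumes x: "C.ob x" and d: "C.ob d" and e: "C.arr e" "C.sr e = tno C d x" "C.tg e = unito C"
    and c: "C.arr c" "C.sr c = unito C" "C.tg c = tno C x d" and t: "C.tri2 x d e c"
  shows "tri2 (Fo x) (Fo d) (inv eps \<cdot> Fa e \<cdot> mu d x) (inv (mu x d) \<cdot> Fa c \<cdot> eps)"
proof -
  have "Fa (cmp C (lunit C d) (cmp C (tnm C e (ident C d)) (cmp C (C.inv (alpha C d x d)) (cmp C (tnm C (ident C d) c) (C.inv (runit C d)))))) = Fa (ident C d)"
    using t unfolding C.tri2_def by simp
  then show ?thesis unfolding tri2_def using x d e c by (simp add: tm_merge tm_merge2)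
qed

lemma F_isdual:
  assumes "C.isdual x d e c"
  shows "isdual (Fo x) (Fo d) (inv eps \<cdot> Fa e \<cdot> mu d x) (inv (mu x d) \<cdot> Fa c \<cdot> eps)"
  using C.isdualD[OF assms] F_tri1[of x d e c] F_tri2[of x d e c] unfolding isdual_def by simp

end

context smfun begin
interpretation C: smdcat C by (rule smdcat.intro, rule smC)
no_notation C.cp (infixr "\<cdot>" 55)
no_notation C.tm (infixr "\<otimes>" 60)
no_notation C.tob (infixr "\<odot>" 60)
notation cp (infixr "\<cdot>" 55)
notation tm (infixr "\<otimes>" 60)
notation tob (infixr "\<odot>" 60)

lemma F_pos:
  assumes "iso_positive C P a"
  shows "iso_positive D (Fa P) (Fo a)"
proof -
  obtain c' G where G: "C.ob c'" "C.iso G" "C.sr G = a" "C.tg G = c'" "P = cmp C (dg C G) G"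
    and P1: "C.arr P" "C.sr P = a" "C.tg P = a"
    using assms unfolding C.iso_positive_iff by blast
  have aG: "C.arr G" using G C.iso_arr by blast
  have "Fa P = dag (Fa G) \<cdot> Fa G" using G aG by simp
  then show ?thesis unfolding iso_positive_iff using G aG P1 F_iso[OF G(2)]
    by (intro conjI exI[of _ "Fo c'"] exI[of _ "Fa G"]) simp_all
qed

lemma ferm_parts:
  assumes "fermionically_dagger_compact X"
  shows "has_duals X" "is_unitary_Z2_action X"
    "\<forall>x \<in> obs X. \<forall>h. is_iso X h x x \<and> iso_positive X h x \<longrightarrow>
        iso_positive X (cmp X (lam X x) (cmp X (inv_ar X (dual_ar X h)) (parity X (dualo X x))))
          (dualo X x)"
  using assms unfolding fermionically_dagger_compact_def by blast+

lemma main_step: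
  assumes fC: "fermionically_dagger_compact C" and fD: "fermionically_dagger_compact D"
    and H: "\<forall>c \<in> obs D. \<forall>j. iso_positive D j c \<and> is_involution D j c \<longrightarrow> j = ident D c"
    and x: "C.ob x"
  shows "Fa (parity C x) = parity D (Fo x)"
proof -
  note fc = ferm_parts[OF fC] and fd = ferm_parts[OF fD]
  define d where "d = dualo C x"
  define e where "e = evl C x"
  define c where "c = coevl C x"
  note Cd = C.isdualD[OF C.duals_isdual[OF fc(1) x], folded d_def e_def c_def]
  define Y where "Y = Fo x"
  define Dd where "Dd = Fo d"
  define e' where "e' = inv eps \<cdot> Fa e \<cdot> mu d x"
  define c' where "c' = inv (mu x d) \<cdot> Fa c \<cdot> eps"
  have Fd: "isdual Y Dd e' c'" unfolding Y_def Dd_def e'_def c'_def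
    by (rule F_isdual) (simp add: C.isdual_def Cd)
  note Fdd = isdualD[OF Fd]
  have yob: "ob Y" unfolding Y_def using x by simp
  note Dds = isdualD[OF duals_isdual[OF fd(1) yob]]
  define Ys where "Ys = dualo D Y"
  obtain \<theta> where th: "iso \<theta>" "sr \<theta> = Dd" "tg \<theta> = Ys" "coevl D Y = (idn Y \<otimes> \<theta>) \<cdot> c'"
    using dual_unique[OF Fd duals_isdual[OF fd(1) yob]] unfolding Ys_def by blast
  have ath: "arr \<theta>" using th iso_arr by blast
  define L where "L = lamf Y Dd c'"
  have L: "arr L" "sr L = Dd" "tg L = Dd" unfolding L_def using Fdd by (simp_all add: lamf_ar)
  have lamD: "lam D Y = \<theta> \<cdot> L \<cdot> dag \<theta>"
    unfolding lam_eq th(4) L_def Ys_def[symmetric]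
    by (rule lamf_transport) (use Fdd th ath Dds Ys_def in simp_all)
  have FL: "Fa (C.lamf x d c) = L" unfolding L_def Y_def Dd_def c'_def
    by (rule F_lamf) (use Cd in simp_all)
  note pC = C.par_ar[OF fc(2)] and pD = par_ar[OF fd(2)]
  have "iso_positive C (cmp C (lam C x) (cmp C (inv_ar C (dual_ar C (ident C x))) (parity C (dualo C x)))) (dualo C x)"
  proof -
    have "is_iso C (ident C x) x x" using x by (simp add: C.is_iso_iff)
    moreover have "iso_positive C (ident C x) x" unfolding C.iso_positive_iff using x
      by (intro conjI exI[of _ x] exI[of _ "C.idn x"]) simp_all
    ultimately show ?thesis using fc(3) x by blast
  qed
  then have P1C: "iso_positive C (cmp C (C.lamf x d c) (parity C d)) d"
    using C.dual_ar_idn[OF fc(1) x] pC[of d] Cd unfolding C.lam_eq d_def[symmetric] c_def[symmetric] by simp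
  have P1: "iso_positive D (L \<cdot> Fa (parity C d)) Dd"
    using F_pos[OF P1C] FL pC[of d] Cd C.lamf_ar[of x d c] unfolding Dd_def by simp
  have "iso_positive D (lam D Y \<cdot> (inv (dual_ar D (idn Y)) \<cdot> parity D Ys)) Ys"
  proof -
    have "is_iso D (idn Y) Y Y" using yob by (simp add: is_iso_iff)
    moreover have "iso_positive D (idn Y) Y" unfolding iso_positive_iff using yob
      by (intro conjI exI[of _ Y] exI[of _ "idn Y"]) simp_all
    ultimately show ?thesis using fd(3) yob unfolding Ys_def by blast
  qed
  then have P0D: "iso_positive D (lam D Y \<cdot> parity D Ys) Ys"
    using dual_ar_idn[OF fd(1) yob] pD[of Ys] Dds unfolding Ys_def[symmetric] by simp
  define t where "t = inv (dag \<theta>)"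
  have t: "iso t" "sr t = Dd" "tg t = Ys" "arr t" unfolding t_def using th ath by (simp_all add: iso_arr)
  have "iso_positive D (dag t \<cdot> (lam D Y \<cdot> parity D Ys) \<cdot> t) Dd"
    using pos_conj[OF P0D t(1)] t by simp
  moreover have "dag t \<cdot> (lam D Y \<cdot> parity D Ys) \<cdot> t = L \<cdot> parity D Dd"
  proof -
    have pn: "parity D Ys \<cdot> dag (inv \<theta>) = dag (inv \<theta>) \<cdot> parity D Dd"
      using par_nat[OF fd(2), of "dag (inv \<theta>)"] th ath by simp
    have dd: "dag \<theta> \<cdot> dag (inv \<theta>) = idn Dd"
    proof -
      have "dag \<theta> \<cdot> dag (inv \<theta>) = dag (inv \<theta> \<cdot> \<theta>)" by (rule dag_cp[symmetric]) (use th ath in simp_all)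
      then show ?thesis using th ath Fdd by simp
    qed
    have "dag t \<cdot> (lam D Y \<cdot> parity D Ys) \<cdot> t = L \<cdot> dag \<theta> \<cdot> parity D Ys \<cdot> dag (inv \<theta>)"
      unfolding t_def lamD using th ath L Dds pD[of Ys] Ys_def by simp
    also have "\<dots> = L \<cdot> dag \<theta> \<cdot> dag (inv \<theta>) \<cdot> parity D Dd" using pn th ath L by simp
    also have "\<dots> = L \<cdot> parity D Dd" using dd chain2[OF dd] th ath L pD[of Dd] Fdd by simp
    finally show ?thesis .
  qed
  ultimately have P0: "iso_positive D (L \<cdot> parity D Dd) Dd" by simp
  define q where "q = Fa (parity C d)"
  have q: "arr q" "sr q = Dd" "tg q = Dd" unfolding q_def Dd_def using pC[of d] Cd by simp_all
  have qq: "q \<cdot> q = idn Dd"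
  proof -
    have "Fa (cmp C (parity C d) (parity C d)) = q \<cdot> q" unfolding q_def by (rule F_cp) (use pC[of d] Cd in simp_all)
    then show ?thesis using pC[of d] Cd unfolding Dd_def by simp
  qed
  have pq: "parity D Dd \<cdot> q = q \<cdot> parity D Dd" using par_nat[OF fd(2) q(1)] q by simp
  define w where "w = parity D Dd \<cdot> q"
  have w: "arr w" "sr w = Dd" "tg w = Dd" unfolding w_def using q pD[of Dd] Fdd by simp_all
  have ww: "w \<cdot> w = idn Dd"
  proof -
    have "w \<cdot> w = parity D Dd \<cdot> (q \<cdot> parity D Dd) \<cdot> q" unfolding w_def using q pD[of Dd] Fdd by simp
    also have "\<dots> = parity D Dd \<cdot> (parity D Dd \<cdot> q) \<cdot> q" using pq by simp
    also have "\<dots> = idn Dd" using q pD[of Dd] Fdd qq chain2[OF pD(5)[of Dd]] by simp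
    finally show ?thesis .
  qed
  have Aw: "(L \<cdot> parity D Dd) \<cdot> w = L \<cdot> q"
    unfolding w_def using L q pD[of Dd] Fdd chain2[OF pD(5)[of Dd]] by simp
  have "w = idn Dd" by (rule pos_invol[OF H P0]) (use P1 Aw w ww q_def in simp_all)
  then have qp: "q = parity D Dd"
  proof -
    assume "w = idn Dd"
    then have "parity D Dd \<cdot> w = parity D Dd" using pD[of Dd] Fdd by simp
    then show ?thesis unfolding w_def using q pD[of Dd] Fdd chain2[OF pD(5)[of Dd]] by simp
  qed
  have evp: "cmp C e (tnm C (ident C d) (parity C x)) = cmp C e (tnm C (parity C d) (ident C x))"
    using C.ev_parity[OF fc(2), of d x e] Cd x by simp
  have "Fa (cmp C e (tnm C (ident C d) (parity C x))) = Fa (cmp C e (tnm C (parity C d) (ident C x)))"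
    using evp by simp
  then have "Fa e \<cdot> mu d x \<cdot> (idn Dd \<otimes> Fa (parity C x)) \<cdot> inv (mu d x) = Fa e \<cdot> mu d x \<cdot> (q \<otimes> idn Y) \<cdot> inv (mu d x)"
    unfolding q_def Dd_def Y_def using Cd x pC by simp
  then have "(Fa e \<cdot> mu d x \<cdot> (idn Dd \<otimes> Fa (parity C x)) \<cdot> inv (mu d x)) \<cdot> mu d x = (Fa e \<cdot> mu d x \<cdot> (q \<otimes> idn Y) \<cdot> inv (mu d x)) \<cdot> mu d x"
    by simp
  then have "Fa e \<cdot> mu d x \<cdot> (idn Dd \<otimes> Fa (parity C x)) = Fa e \<cdot> mu d x \<cdot> (q \<otimes> idn Y)"
    unfolding q_def Dd_def Y_def using Cd x pC by simp
  then have s1a: "e' \<cdot> (idn Dd \<otimes> Fa (parity C x)) = e' \<cdot> (q \<otimes> idn Y)"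
    unfolding e'_def q_def Dd_def Y_def using Cd x pC by simp
  have s1: "e' \<cdot> (idn Dd \<otimes> Fa (parity C x)) = e' \<cdot> (parity D Dd \<otimes> idn Y)"
    using s1a qp by simp
  have s2: "e' \<cdot> (parity D Dd \<otimes> idn Y) = e' \<cdot> (idn Dd \<otimes> parity D Y)"
    by (rule ev_parity[OF fd(2)]) (use Fdd in simp_all)
  have fx: "arr (Fa (parity C x))" "sr (Fa (parity C x)) = Y" "tg (Fa (parity C x)) = Y"
    unfolding Y_def using pC[OF x] x by simp_all
  have "Fa (parity C x) = ru Y \<cdot> (idn Y \<otimes> (e' \<cdot> (idn Dd \<otimes> Fa (parity C x)))) \<cdot> asc Y Dd Y \<cdot> (c' \<otimes> idn Y) \<cdot> inv (lu Y)"
    by (rule tri1_inj) (use Fdd fx in simp_all)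
  also have "\<dots> = ru Y \<cdot> (idn Y \<otimes> (e' \<cdot> (idn Dd \<otimes> parity D Y))) \<cdot> asc Y Dd Y \<cdot> (c' \<otimes> idn Y) \<cdot> inv (lu Y)"
    using s1 s2 by simp
  also have "\<dots> = parity D Y"
    by (rule tri1_inj[symmetric]) (use Fdd pD[OF yob] in simp_all)
  finally show ?thesis unfolding Y_def .
qed

end

theorem mainTheorem1:
  fixes C :: "('o1, 'm1) smdc" and D :: "('o2, 'm2) smdc"
    and F :: "('o1, 'm1, 'o2, 'm2) smfun"
  assumes "fermionically_dagger_compact C"
    and "fermionically_dagger_compact D"
    and "is_sm_dagger_functor C D F"
    and "\<forall>c \<in> obs D. \<forall>j. iso_positive D j c \<and> is_involution D j c \<longrightarrow> j = ident D c"
  shows "\<forall>x \<in> obs C. far F (parity C x) = parity D (fob F x)"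
proof -
  have smD: "is_sym_monoidal_dagger D" using assms(2) unfolding fermionically_dagger_compact_def by blast
  have smC: "is_sym_monoidal_dagger C" using assms(1) unfolding fermionically_dagger_compact_def by blast
  interpret S: smfun D C F
    apply (rule smfun.intro)
     apply (rule smdcat.intro, rule smD)
    apply (rule smfun_axioms.intro)
     apply (rule smC)
    apply (rule assms(3))
    done
  show ?thesis using S.main_step[OF assms(1) assms(2) assms(4)] by blast
qed

end
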